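(* Any vector space over a division ring is locally trace equivalent to its underlying additive group. Hence the local trace equivalence class of an infinite vector space over a division ring is determined by the characteristic of the division ring.
   Context: A vector space over a division ring $\mathbb{E}$ is viewed as a structure in the language of abelian groups together with unary functions $v\mapsto\lambda v$ for each $\lambda\in\mathbb{E}$. "Definable" means with parameters. $\mathcal{N}$ locally trace defines $\mathcal{M}$ if there is a possibly infinite collection $\mathcal{E}$ of functions $M\to N$ such that every $\mathcal{M}$-definable subset of every $M^m$ is of the form $\{(a_1,\dots,a_m) : (f_1(a_{i_1}),\dots,f_n(a_{i_n}))\in Y\}$ for some $f_j\in\mathcal{E}$, $i_j\in\{1,\dots,m\}$ and $\mathcal{N}$-definable $Y\subseteq N^n$. A theory $T$ locally trace defines $T^*$ if some model of $T$ locally trace defines some model of $T^*$; two structures are locally trace equivalent if each of their theories locally trace defines the other. *)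

theory Defs
  imports Main
begin

datatype 'f trm = Var nat | App 'f "'f trm list"

datatype 'f fm = FEq "'f trm" "'f trm" | FNeg "'f fm" | FConj "'f fm" "'f fm" | FEx nat "'f fm"

text \<open>A structure: a carrier set together with an interpretation of the function symbols.
  The language is given by an arity function.\<close>
type_synonym ('a, 'f) struct = "'a set \<times> ('f \<Rightarrow> 'a list \<Rightarrow> 'a)"

primrec eval_trm :: "('f \<Rightarrow> 'a list \<Rightarrow> 'a) \<Rightarrow> (nat \<Rightarrow> 'a) \<Rightarrow> 'f trm \<Rightarrow> 'a" where
  "eval_trm I s (Var n) = s n"
| "eval_trm I s (App f ts) = I f (map (eval_trm I s) ts)"

primrec wf_trm :: "('f \<Rightarrow> nat) \<Rightarrow> 'f trm \<Rightarrow> bool" where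
  "wf_trm ar (Var n) = True"
| "wf_trm ar (App f ts) = (length ts = ar f \<and> list_all (wf_trm ar) ts)"

primrec fv_trm :: "'f trm \<Rightarrow> nat set" where
  "fv_trm (Var n) = {n}"
| "fv_trm (App f ts) = \<Union> (set (map fv_trm ts))"

primrec wf_fm :: "('f \<Rightarrow> nat) \<Rightarrow> 'f fm \<Rightarrow> bool" where
  "wf_fm ar (FEq t u) = (wf_trm ar t \<and> wf_trm ar u)"
| "wf_fm ar (FNeg \<phi>) = wf_fm ar \<phi>"
| "wf_fm ar (FConj \<phi> \<psi>) = (wf_fm ar \<phi> \<and> wf_fm ar \<psi>)"
| "wf_fm ar (FEx n \<phi>) = wf_fm ar \<phi>"

primrec fv_fm :: "'f fm \<Rightarrow> nat set" where
  "fv_fm (FEq t u) = fv_trm t \<union> fv_trm u"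
| "fv_fm (FNeg \<phi>) = fv_fm \<phi>"
| "fv_fm (FConj \<phi> \<psi>) = fv_fm \<phi> \<union> fv_fm \<psi>"
| "fv_fm (FEx n \<phi>) = fv_fm \<phi> - {n}"

primrec sat :: "('a, 'f) struct \<Rightarrow> (nat \<Rightarrow> 'a) \<Rightarrow> 'f fm \<Rightarrow> bool" where
  "sat M s (FEq t u) = (eval_trm (snd M) s t = eval_trm (snd M) s u)"
| "sat M s (FNeg \<phi>) = (\<not> sat M s \<phi>)"
| "sat M s (FConj \<phi> \<psi>) = (sat M s \<phi> \<and> sat M s \<psi>)"
| "sat M s (FEx n \<phi>) = (\<exists>a\<in>fst M. sat M (s(n := a)) \<phi>)"

definition is_struct :: "('f \<Rightarrow> nat) \<Rightarrow> ('a, 'f) struct \<Rightarrow> bool" where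
  "is_struct ar M \<longleftrightarrow> fst M \<noteq> {} \<and>
     (\<forall>f xs. length xs = ar f \<and> set xs \<subseteq> fst M \<longrightarrow> snd M f xs \<in> fst M)"

text \<open>The tuple occupies variables \<open>0..<m\<close>, parameters are assigned to the other variables.\<close>
definition definable :: "('f \<Rightarrow> nat) \<Rightarrow> ('a, 'f) struct \<Rightarrow> nat \<Rightarrow> 'a list set \<Rightarrow> bool" where
  "definable ar M m D \<longleftrightarrow> (\<exists>\<phi> p. wf_fm ar \<phi> \<and> range p \<subseteq> fst M \<and>
     D = {xs. length xs = m \<and> set xs \<subseteq> fst M \<and>
              sat M (\<lambda>i. if i < m then xs ! i else p i) \<phi>})"

definition elem_equiv :: "('f \<Rightarrow> nat) \<Rightarrow> ('a, 'f) struct \<Rightarrow> ('b, 'f) struct \<Rightarrow> bool" where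
  "elem_equiv ar M N \<longleftrightarrow> (\<forall>\<phi>. wf_fm ar \<phi> \<and> fv_fm \<phi> = {} \<longrightarrow>
     ((\<exists>s. range s \<subseteq> fst M \<and> sat M s \<phi>) \<longleftrightarrow> (\<exists>s. range s \<subseteq> fst N \<and> sat N s \<phi>)))"

definition loc_trace_defines ::
  "('g \<Rightarrow> nat) \<Rightarrow> ('b, 'g) struct \<Rightarrow> ('f \<Rightarrow> nat) \<Rightarrow> ('a, 'f) struct \<Rightarrow> bool" where
  "loc_trace_defines arN N arM M \<longleftrightarrow> (\<exists>E :: ('a \<Rightarrow> 'b) set.
     (\<forall>f\<in>E. f ` fst M \<subseteq> fst N) \<and>
     (\<forall>m D. definable arM M m D \<longrightarrow>
        (\<exists>fs idx Y. length idx = length fs \<and> set fs \<subseteq> E \<and> (\<forall>i\<in>set idx. i < m) \<and>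
           definable arN N (length fs) Y \<and>
           D = {xs. length xs = m \<and> set xs \<subseteq> fst M \<and>
                    map2 (\<lambda>f i. f (xs ! i)) fs idx \<in> Y})))"

text \<open>\<open>Th(N)\<close> locally trace defines \<open>Th(M)\<close>: some model of \<open>Th(N)\<close> (with carrier in
  type \<open>'c\<close>) locally trace defines some model of \<open>Th(M)\<close> (with carrier in type \<open>'d\<close>).\<close>
definition th_loc_trace_defines ::
  "'c itself \<Rightarrow> 'd itself \<Rightarrow> ('g \<Rightarrow> nat) \<Rightarrow> ('b, 'g) struct \<Rightarrow> ('f \<Rightarrow> nat) \<Rightarrow> ('a, 'f) struct \<Rightarrow> bool" where
  "th_loc_trace_defines _ _ arN N arM M \<longleftrightarrow>
     (\<exists>(N' :: ('c, 'g) struct) (M' :: ('d, 'f) struct).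
        is_struct arN N' \<and> is_struct arM M' \<and> elem_equiv arN N N' \<and> elem_equiv arM M M' \<and>
        loc_trace_defines arN N' arM M')"

definition loc_trace_equiv ::
  "'c itself \<Rightarrow> 'd itself \<Rightarrow> ('f \<Rightarrow> nat) \<Rightarrow> ('a, 'f) struct \<Rightarrow> ('g \<Rightarrow> nat) \<Rightarrow> ('b, 'g) struct \<Rightarrow> bool" where
  "loc_trace_equiv tc td arM M arN N \<longleftrightarrow>
     th_loc_trace_defines tc td arM M arN N \<and> th_loc_trace_defines td tc arN N arM M"

datatype gsym = GAdd | GNeg | GZero
datatype 'e vsym = VAdd | VNeg | VZero | VSc 'e

fun gar :: "gsym \<Rightarrow> nat" where
  "gar GAdd = 2" | "gar GNeg = 1" | "gar GZero = 0"

fun var :: "'e vsym \<Rightarrow> nat" where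
  "var VAdd = 2" | "var VNeg = 1" | "var VZero = 0" | "var (VSc _) = 1"

fun ginterp :: "gsym \<Rightarrow> 'v::ab_group_add list \<Rightarrow> 'v" where
  "ginterp GAdd xs = xs ! 0 + xs ! 1"
| "ginterp GNeg xs = - (xs ! 0)"
| "ginterp GZero xs = 0"

fun vinterp :: "('e \<Rightarrow> 'v \<Rightarrow> 'v) \<Rightarrow> 'e vsym \<Rightarrow> 'v::ab_group_add list \<Rightarrow> 'v" where
  "vinterp sc VAdd xs = xs ! 0 + xs ! 1"
| "vinterp sc VNeg xs = - (xs ! 0)"
| "vinterp sc VZero xs = 0"
| "vinterp sc (VSc c) xs = sc c (xs ! 0)"

definition grp_struct :: "'v::ab_group_add itself \<Rightarrow> ('v, gsym) struct" where
  "grp_struct _ = (UNIV, ginterp)"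

definition vs_struct :: "('e \<Rightarrow> 'v \<Rightarrow> 'v) \<Rightarrow> ('v::ab_group_add, 'e vsym) struct" where
  "vs_struct sc = (UNIV, vinterp sc)"

definition is_vector_space :: "('e::division_ring \<Rightarrow> 'v::ab_group_add \<Rightarrow> 'v) \<Rightarrow> bool" where
  "is_vector_space sc \<longleftrightarrow>
     (\<forall>a x y. sc a (x + y) = sc a x + sc a y) \<and>
     (\<forall>a b x. sc (a + b) x = sc a x + sc b x) \<and>
     (\<forall>a b x. sc (a * b) x = sc a (sc b x)) \<and>
     (\<forall>x. sc 1 x = x)"

end

theory Submission
  imports Defs "HOL-Library.Poly_Mapping"
begin

lemma vs_props:
  assumes "is_vector_space sc"
  shows "sc a (x + y) = sc a x + sc a y" "sc (a + b) x = sc a x + sc b x"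
    "sc (a * b) x = sc a (sc b x)" "sc 1 x = x" "sc 0 x = 0" "sc a 0 = 0"
    "sc (- a) x = - sc a x" "sc a (- x) = - sc a x"
proof -
  show "sc a (x + y) = sc a x + sc a y" "sc (a + b) x = sc a x + sc b x"
    "sc (a * b) x = sc a (sc b x)" "sc 1 x = x" using assms unfolding is_vector_space_def by auto
  have "sc (0+0) x = sc 0 x + sc 0 x" using assms unfolding is_vector_space_def by blast
  then show z: "sc 0 x = 0" by simp
  have "sc a (0+0) = sc a 0 + sc a 0" using assms unfolding is_vector_space_def by blast
  then show z2: "sc a 0 = 0" by simp
  have "sc (- a) x + sc a x = sc (-a + a) x" using assms unfolding is_vector_space_def by metis
  also have "\<dots> = 0" using z by simp
  finally show "sc (- a) x = - sc a x" by (simp add: eq_neg_iff_add_eq_0)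
  have "sc a (- x) + sc a x = sc a (-x + x)" using assms unfolding is_vector_space_def by metis
  also have "\<dots> = 0" using z2 by simp
  finally show "sc a (- x) = - sc a x" by (simp add: eq_neg_iff_add_eq_0)
qed

type_synonym 'k lf = "(nat \<times> 'k) list"

definition evl :: "('k \<Rightarrow> 'v \<Rightarrow> 'v) \<Rightarrow> (nat \<Rightarrow> 'v) \<Rightarrow> 'k lf \<Rightarrow> 'v::ab_group_add" where
  "evl sc s L = sum_list (map (\<lambda>(i,c). sc c (s i)) L)"

definition scl :: "'k::times \<Rightarrow> 'k lf \<Rightarrow> 'k lf" where
  "scl c L = map (\<lambda>(i,d). (i, c * d)) L"

lemma var_3: "Suc (Suc (Suc n)) = var f \<Longrightarrow> False" by (cases f) auto

fun lin :: "'k::division_ring vsym trm \<Rightarrow> 'k lf" where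
  "lin (Var n) = [(n, 1)]"
| "lin (App VAdd [a, b]) = lin a @ lin b"
| "lin (App VNeg [a]) = scl (-1) (lin a)"
| "lin (App (VSc c) [a]) = scl c (lin a)"
| "lin (App _ _) = []"

lemma evl_append[simp]: "evl sc s (L @ M) = evl sc s L + evl sc s M"
  by (simp add: evl_def)
lemma evl_Nil[simp]: "evl sc s [] = 0" by (simp add: evl_def)
lemma evl_Cons[simp]: "evl sc s ((i,c) # L) = sc c (s i) + evl sc s L" by (simp add: evl_def)

lemma evl_scl: assumes "is_vector_space sc" shows "evl sc s (scl c L) = sc c (evl sc s L)"
  by (induction L) (auto simp: scl_def vs_props[OF assms])

lemma lin_correct:
  assumes "is_vector_space sc" "wf_trm var t"
  shows "eval_trm (vinterp sc) s t = evl sc s (lin t)"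
  using assms(2)
proof (induction t rule: lin.induct)
  case (1 n) then show ?case using vs_props[OF assms(1)] by simp
next
  case (2 a b) then show ?case by simp
next
  case (3 a) then show ?case by (simp add: evl_scl[OF assms(1)] vs_props[OF assms(1)])
next
  case (4 c a) then show ?case by (simp add: evl_scl[OF assms(1)])
qed (auto simp: numeral_2_eq_2 length_Suc_conv elim!: var.elims dest: var_3)


datatype 'k qf = QAt "'k lf" | QNot "'k qf" | QAnd "'k qf" "'k qf"

primrec qsat :: "('k \<Rightarrow> 'v \<Rightarrow> 'v) \<Rightarrow> (nat \<Rightarrow> 'v::ab_group_add) \<Rightarrow> 'k qf \<Rightarrow> bool" where
  "qsat sc s (QAt L) = (evl sc s L = 0)"
| "qsat sc s (QNot a) = (\<not> qsat sc s a)"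
| "qsat sc s (QAnd a b) = (qsat sc s a \<and> qsat sc s b)"

definition lfv :: "'k lf \<Rightarrow> nat set" where "lfv L = fst ` set L"

primrec qfv :: "'k qf \<Rightarrow> nat set" where
  "qfv (QAt L) = lfv L"
| "qfv (QNot a) = qfv a"
| "qfv (QAnd a b) = qfv a \<union> qfv b"

primrec atoms :: "'k qf \<Rightarrow> 'k lf list" where
  "atoms (QAt L) = [L]"
| "atoms (QNot a) = atoms a"
| "atoms (QAnd a b) = atoms a @ atoms b"

definition coef :: "nat \<Rightarrow> 'k lf \<Rightarrow> 'k::monoid_add" where
  "coef y L = sum_list (map snd (filter (\<lambda>(i,c). i = y) L))"

definition rmv :: "nat \<Rightarrow> 'k lf \<Rightarrow> 'k lf" where
  "rmv y L = filter (\<lambda>(i,c). i \<noteq> y) L"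

definition QFalse :: "'k qf" where "QFalse = QNot (QAt [])"
definition qor :: "'k qf \<Rightarrow> 'k qf \<Rightarrow> 'k qf" where "qor a b = QNot (QAnd (QNot a) (QNot b))"
definition qdisj :: "'k qf list \<Rightarrow> 'k qf" where "qdisj xs = foldr qor xs QFalse"

definition tests :: "nat \<Rightarrow> 'k::division_ring qf \<Rightarrow> 'k lf list" where
  "tests y \<psi> = map (\<lambda>L. scl (- inverse (coef y L)) (rmv y L)) (filter (\<lambda>L. coef y L \<noteq> 0) (atoms \<psi>))"

primrec substq :: "nat \<Rightarrow> 'k::division_ring lf \<Rightarrow> 'k qf \<Rightarrow> 'k qf" where
  "substq y R (QAt L) = QAt (rmv y L @ scl (coef y L) R)"
| "substq y R (QNot a) = QNot (substq y R a)"
| "substq y R (QAnd a b) = QAnd (substq y R a) (substq y R b)"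

primrec gen :: "nat \<Rightarrow> 'k::division_ring qf \<Rightarrow> 'k qf" where
  "gen y (QAt L) = (if coef y L \<noteq> 0 then QFalse else QAt (rmv y L))"
| "gen y (QNot a) = QNot (gen y a)"
| "gen y (QAnd a b) = QAnd (gen y a) (gen y b)"

definition qe :: "nat \<Rightarrow> 'k::division_ring qf \<Rightarrow> 'k qf" where
  "qe y \<psi> = qdisj (gen y \<psi> # map (\<lambda>R. substq y R \<psi>) (tests y \<psi>))"

lemma qsat_QFalse[simp]: "\<not> qsat sc s QFalse" by (simp add: QFalse_def)
lemma qsat_qor[simp]: "qsat sc s (qor a b) = (qsat sc s a \<or> qsat sc s b)" by (simp add: qor_def)
lemma qsat_qdisj: "qsat sc s (qdisj xs) = (\<exists>x\<in>set xs. qsat sc s x)"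
  by (induction xs) (auto simp: qdisj_def)

lemma lfv_simps[simp]: "lfv [] = {}" "lfv (x # L) = insert (fst x) (lfv L)" "lfv (L @ M) = lfv L \<union> lfv M"
  by (auto simp: lfv_def)
lemma lfv_rmv[simp]: "lfv (rmv y L) = lfv L - {y}" by (auto simp: lfv_def rmv_def)
lemma lfv_scl[simp]: "lfv (scl c L) = lfv L" by (force simp: lfv_def scl_def)

lemma evl_upd: "y \<notin> lfv L \<Longrightarrow> evl sc (s(y:=a)) L = evl sc s L"
  by (induction L) auto

lemma evl_split:
  assumes "is_vector_space sc"
  shows "evl sc s L = sc (coef y L) (s y) + evl sc s (rmv y L)"
  by (induction L) (auto simp: coef_def rmv_def vs_props[OF assms] algebra_simps)

lemma qsat_substq:
  assumes "is_vector_space sc" "y \<notin> lfv R"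
  shows "qsat sc s (substq y R \<psi>) = qsat sc (s(y := evl sc s R)) \<psi>"
proof (induction \<psi>)
  case (QAt L)
  have "evl sc (s(y := evl sc s R)) L = sc (coef y L) (evl sc s R) + evl sc (s(y := evl sc s R)) (rmv y L)"
    using evl_split[OF assms(1), of "s(y := evl sc s R)" L y] by (metis fun_upd_same)
  also have "evl sc (s(y := evl sc s R)) (rmv y L) = evl sc s (rmv y L)"
    by (rule evl_upd) simp
  finally show ?case by (simp add: evl_scl[OF assms(1)] add.commute)
qed auto

lemma qsat_gen:
  assumes "is_vector_space sc" "\<forall>R\<in>set (tests y \<psi>). a \<noteq> evl sc s R"
  shows "qsat sc (s(y:=a)) \<psi> = qsat sc s (gen y \<psi>)"
  using assms(2)
proof (induction \<psi>)
  case (QAt L)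
  have e: "evl sc (s(y:=a)) L = sc (coef y L) a + evl sc s (rmv y L)"
    using evl_split[OF assms(1), of "s(y:=a)" L y] evl_upd[of y "rmv y L"] by simp
  show ?case
  proof (cases "coef y L = 0")
    case True
    then have "evl sc (s(y:=a)) L = evl sc s (rmv y L)" using e by (simp add: vs_props[OF assms(1)])
    then show ?thesis using True by (simp del: fun_upd_apply)
  next
    case False
    let ?c = "coef y L"
    have "a \<noteq> evl sc s (scl (- inverse ?c) (rmv y L))"
      using QAt False by (auto simp: tests_def)
    moreover have "sc ?c a + evl sc s (rmv y L) = 0 \<Longrightarrow> a = evl sc s (scl (- inverse ?c) (rmv y L))"
    proof -
      assume h: "sc ?c a + evl sc s (rmv y L) = 0"
      have "a = sc (inverse ?c * ?c) a" using False by (simp add: vs_props[OF assms(1)])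
      also have "\<dots> = sc (inverse ?c) (sc ?c a)" by (simp add: vs_props[OF assms(1)])
      also have "sc ?c a = - evl sc s (rmv y L)" using h by (simp add: eq_neg_iff_add_eq_0)
      finally show ?thesis by (simp add: evl_scl[OF assms(1)] vs_props[OF assms(1)])
    qed
    ultimately show ?thesis using e False by (auto simp del: fun_upd_apply)
  qed
qed (auto simp: tests_def)

lemma tests_fv: "R \<in> set (tests y \<psi>) \<Longrightarrow> y \<notin> lfv R"
  by (auto simp: tests_def)

lemma qe_correct:
  fixes sc :: "'k::division_ring \<Rightarrow> 'v::ab_group_add \<Rightarrow> 'v"
  assumes "is_vector_space sc" "infinite (UNIV :: 'v set)"
  shows "(\<exists>a::'v. qsat sc (s(y:=a)) \<psi>) = qsat sc s (qe y \<psi>)"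
proof
  assume "\<exists>a. qsat sc (s(y:=a)) \<psi>"
  then obtain a where a: "qsat sc (s(y:=a)) \<psi>" by blast
  show "qsat sc s (qe y \<psi>)"
  proof (cases "\<exists>R\<in>set (tests y \<psi>). a = evl sc s R")
    case True
    then obtain R where R: "R \<in> set (tests y \<psi>)" "a = evl sc s R" by blast
    then have "qsat sc s (substq y R \<psi>)" using a qsat_substq[OF assms(1) tests_fv[OF R(1)]] by simp
    then show ?thesis using R by (auto simp: qe_def qsat_qdisj)
  next
    case False
    then show ?thesis using a qsat_gen[OF assms(1), of y \<psi> a s] by (auto simp: qe_def qsat_qdisj)
  qed
next
  assume "qsat sc s (qe y \<psi>)"
  then consider "qsat sc s (gen y \<psi>)" | R where "R \<in> set (tests y \<psi>)" "qsat sc s (substq y R \<psi>)"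
    by (auto simp: qe_def qsat_qdisj)
  then show "\<exists>a. qsat sc (s(y:=a)) \<psi>"
  proof cases
    case 1
    have "finite (evl sc s ` set (tests y \<psi>))" by simp
    then obtain a where "a \<notin> evl sc s ` set (tests y \<psi>)"
      using assms(2) ex_new_if_finite by blast
    then show ?thesis using 1 qsat_gen[OF assms(1), of y \<psi> a s] by auto
  next
    case 2
    then show ?thesis using qsat_substq[OF assms(1) tests_fv[OF 2(1)]] by blast
  qed
qed

lemma qfv_substq: "y \<notin> lfv R \<Longrightarrow> qfv (substq y R \<psi>) \<subseteq> (qfv \<psi> - {y}) \<union> lfv R"
  by (induction \<psi>) auto

lemma qfv_gen: "qfv (gen y \<psi>) \<subseteq> qfv \<psi> - {y}"
  by (induction \<psi>) (auto simp: QFalse_def)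

lemma lfv_tests: "R \<in> set (tests y \<psi>) \<Longrightarrow> lfv R \<subseteq> qfv \<psi> - {y}"
proof -
  have "L \<in> set (atoms \<psi>) \<Longrightarrow> lfv L \<subseteq> qfv \<psi>" for L by (induction \<psi>) auto
  then show "R \<in> set (tests y \<psi>) \<Longrightarrow> lfv R \<subseteq> qfv \<psi> - {y}" by (fastforce simp: tests_def)
qed

lemma qfv_qdisj: "qfv (qdisj xs) = \<Union> (qfv ` set xs)"
  by (induction xs) (auto simp: qdisj_def qor_def QFalse_def)

lemma qfv_qe: "qfv (qe y \<psi>) \<subseteq> qfv \<psi> - {y}"
  using qfv_gen[of y \<psi>] qfv_substq[OF tests_fv] lfv_tests
  by (fastforce simp: qe_def qfv_qdisj)

primrec fm2qf :: "'k::division_ring vsym fm \<Rightarrow> 'k qf" where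
  "fm2qf (FEq t u) = QAt (lin t @ scl (-1) (lin u))"
| "fm2qf (FNeg \<phi>) = QNot (fm2qf \<phi>)"
| "fm2qf (FConj \<phi> \<psi>) = QAnd (fm2qf \<phi>) (fm2qf \<psi>)"
| "fm2qf (FEx n \<phi>) = qe n (fm2qf \<phi>)"

lemma fm2qf_correct:
  assumes "is_vector_space sc" "infinite (UNIV :: 'v set)" "wf_fm var \<phi>"
  shows "sat (vs_struct sc) s \<phi> = qsat (sc :: 'k::division_ring \<Rightarrow> 'v::ab_group_add \<Rightarrow> 'v) s (fm2qf \<phi>)"
  using assms(3)
proof (induction \<phi> arbitrary: s)
  case (FEq t u)
  then show ?case
    by (simp add: vs_struct_def lin_correct[OF assms(1)] evl_scl[OF assms(1)] vs_props[OF assms(1)]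
)
next
  case (FEx n \<phi>)
  then show ?case using qe_correct[OF assms(1,2)] by (simp add: vs_struct_def)
qed auto

lemma lfv_lin: "lfv (lin t) \<subseteq> fv_trm t"
  by (induction t rule: lin.induct) auto

lemma qfv_fm2qf: "qfv (fm2qf \<phi>) \<subseteq> fv_fm \<phi>"
proof (induction \<phi>)
  case (FEq t u) then show ?case using lfv_lin[of t] lfv_lin[of u] by auto
next
  case (FEx n \<phi>) then show ?case using qfv_qe[of n "fm2qf \<phi>"] by auto
qed auto

primrec cval :: "'k qf \<Rightarrow> bool" where
  "cval (QAt L) = True"
| "cval (QNot a) = (\<not> cval a)"
| "cval (QAnd a b) = (cval a \<and> cval b)"

lemma qsat_closed: "qfv \<psi> = {} \<Longrightarrow> qsat sc s \<psi> = cval \<psi>"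
  by (induction \<psi>) (auto simp: lfv_def)

lemma ee_vs:
  fixes sc1 :: "'k::division_ring \<Rightarrow> 'x::ab_group_add \<Rightarrow> 'x"
    and sc2 :: "'k::division_ring \<Rightarrow> 'y::ab_group_add \<Rightarrow> 'y"
  assumes "is_vector_space sc1" "infinite (UNIV :: 'x set)"
    "is_vector_space sc2" "infinite (UNIV :: 'y set)"
  shows "elem_equiv var (vs_struct sc1) (vs_struct sc2)"
  unfolding elem_equiv_def
proof (intro allI impI)
  fix \<phi> :: "'k vsym fm" assume h: "wf_fm var \<phi> \<and> fv_fm \<phi> = {}"
  then have c: "qfv (fm2qf \<phi>) = {}" using qfv_fm2qf[of \<phi>] by auto
  show "(\<exists>s. range s \<subseteq> fst (vs_struct sc1) \<and> sat (vs_struct sc1) s \<phi>) =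
        (\<exists>s. range s \<subseteq> fst (vs_struct sc2) \<and> sat (vs_struct sc2) s \<phi>)"
    using fm2qf_correct[OF assms(1,2)] fm2qf_correct[OF assms(3,4)] h qsat_closed[OF c, of sc1] qsat_closed[OF c, of sc2]
    by (simp add: vs_struct_def)
qed


fun sumt :: "nat \<Rightarrow> gsym trm" where
  "sumt 0 = App GZero []"
| "sumt (Suc n) = App GAdd [sumt n, Var n]"

lemma sumt_wf: "wf_trm gar (sumt n)"
  by (induction n) (auto simp: numeral_2_eq_2)

lemma sumt_eval: "eval_trm ginterp t (sumt n) = (\<Sum>j<n. t j)"
  by (induction n) auto

primrec shiftt :: "nat \<Rightarrow> 'f trm \<Rightarrow> 'f trm" where
  "shiftt k (Var j) = Var (j + k)"
| "shiftt k (App f ts) = App f (map (shiftt k) ts)"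

primrec shiftf :: "nat \<Rightarrow> 'f fm \<Rightarrow> 'f fm" where
  "shiftf k (FEq t u) = FEq (shiftt k t) (shiftt k u)"
| "shiftf k (FNeg \<phi>) = FNeg (shiftf k \<phi>)"
| "shiftf k (FConj \<phi> \<psi>) = FConj (shiftf k \<phi>) (shiftf k \<psi>)"
| "shiftf k (FEx n \<phi>) = FEx (n + k) (shiftf k \<phi>)"

lemma shiftt_eval: "eval_trm I s (shiftt k t) = eval_trm I (\<lambda>j. s (j + k)) t"
proof (induction t)
  case (App f ts)
  then show ?case by (simp cong: map_cong)
qed simp

lemma shiftt_wf: "wf_trm ar (shiftt k t) = wf_trm ar t"
proof (induction t)
  case (App f ts)
  then show ?case by (simp add: list_all_iff)
qed simp

lemma shiftf_wf: "wf_fm ar (shiftf k \<phi>) = wf_fm ar \<phi>"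
  by (induction \<phi>) (auto simp: shiftt_wf)

lemma shiftf_sat: "sat M s (shiftf k \<phi>) = sat M (\<lambda>j. s (j + k)) \<phi>"
proof (induction \<phi> arbitrary: s)
  case (FEq t u) then show ?case by (simp add: shiftt_eval)
next
  case (FEx n \<phi>)
  have "\<And>a. (\<lambda>j. (s(n + k := a)) (j + k)) = (\<lambda>j. s (j + k))(n := a)" by auto
  then show ?case using FEx by simp
qed auto

definition PB :: "('y \<Rightarrow> 'x::ab_group_add) set \<Rightarrow> nat \<Rightarrow> 'y list set \<Rightarrow> bool" where
  "PB E m S \<longleftrightarrow> (\<exists>fs idx \<chi>. set fs \<subseteq> E \<and> length idx = length fs \<and> (\<forall>i\<in>set idx. i < m) \<and>
     wf_fm gar \<chi> \<and>
     (\<forall>xs t. length xs = m \<longrightarrow> (\<forall>j < length fs. t j = map2 (\<lambda>f i. f (xs!i)) fs idx ! j) \<longrightarrow>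
        (xs \<in> S \<longleftrightarrow> sat (grp_struct TYPE('x)) t \<chi>)))"

lemma PB_cong: "PB E m S \<Longrightarrow> (\<And>xs. length xs = m \<Longrightarrow> xs \<in> S \<longleftrightarrow> xs \<in> S') \<Longrightarrow> PB E m S'"
  unfolding PB_def by metis

lemma PB_compl: "PB E m S \<Longrightarrow> PB E m (- S)"
  unfolding PB_def
  apply (elim exE conjE)
  subgoal for fs idx \<chi> by (rule exI[of _ fs], rule exI[of _ idx], rule exI[of _ "FNeg \<chi>"]) auto
  done

lemma PB_true: "PB E m UNIV"
  unfolding PB_def by (rule exI[of _ "[]"], rule exI[of _ "[]"], rule exI[of _ "FEq (Var 0) (Var 0)"]) auto

lemma PB_false: "PB E m {}"
  using PB_compl[OF PB_true] by simp

lemma PB_m0: "PB E 0 S"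
proof (cases "[] \<in> S")
  case True then show ?thesis by (intro PB_cong[OF PB_true]) auto
next
  case False then show ?thesis by (intro PB_cong[OF PB_false]) auto
qed

lemma map2_append: "length a = length c \<Longrightarrow> map2 g (a @ b) (c @ d) = map2 g a c @ map2 g b d"
  by simp

lemma PB_int:
  assumes "PB E m S" "PB E m S'"
  shows "PB E m (S \<inter> S')"
proof -
  obtain fs1 idx1 \<chi>1 where 1: "set fs1 \<subseteq> E" "length idx1 = length fs1" "\<forall>i\<in>set idx1. i < m"
     "wf_fm gar \<chi>1" "\<And>xs t. length xs = m \<Longrightarrow> (\<forall>j < length fs1. t j = map2 (\<lambda>f i. f (xs!i)) fs1 idx1 ! j) \<Longrightarrow>
        (xs \<in> S \<longleftrightarrow> sat (grp_struct TYPE('b)) t \<chi>1)"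
    using assms(1) unfolding PB_def by metis
  obtain fs2 idx2 \<chi>2 where 2: "set fs2 \<subseteq> E" "length idx2 = length fs2" "\<forall>i\<in>set idx2. i < m"
     "wf_fm gar \<chi>2" "\<And>xs t. length xs = m \<Longrightarrow> (\<forall>j < length fs2. t j = map2 (\<lambda>f i. f (xs!i)) fs2 idx2 ! j) \<Longrightarrow>
        (xs \<in> S' \<longleftrightarrow> sat (grp_struct TYPE('b)) t \<chi>2)"
    using assms(2) unfolding PB_def by metis
  let ?n1 = "length fs1"
  show ?thesis unfolding PB_def
  proof (intro exI conjI allI impI)
    show "set (fs1 @ fs2) \<subseteq> E" "length (idx1 @ idx2) = length (fs1 @ fs2)" "\<forall>i\<in>set (idx1 @ idx2). i < m"
      "wf_fm gar (FConj \<chi>1 (shiftf ?n1 \<chi>2))" using 1 2 by (auto simp: shiftf_wf)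
    fix xs :: "'a list" and t
    assume xs: "length xs = m" and t: "\<forall>j<length (fs1 @ fs2). t j = map2 (\<lambda>f i. f (xs!i)) (fs1 @ fs2) (idx1 @ idx2) ! j"
    have e: "map2 (\<lambda>f i. f (xs!i)) (fs1 @ fs2) (idx1 @ idx2) = map2 (\<lambda>f i. f (xs!i)) fs1 idx1 @ map2 (\<lambda>f i. f (xs!i)) fs2 idx2"
      using 1(2) by simp
    have t1: "\<forall>j < length fs1. t j = map2 (\<lambda>f i. f (xs!i)) fs1 idx1 ! j"
      using t 1(2) unfolding e by (auto simp: nth_append)
    have t2: "\<forall>j < length fs2. (\<lambda>j. t (j + ?n1)) j = map2 (\<lambda>f i. f (xs!i)) fs2 idx2 ! j"
      using t 1(2) 2(2) unfolding e by (auto simp: nth_append)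
    show "(xs \<in> S \<inter> S') = sat (grp_struct TYPE('b)) t (FConj \<chi>1 (shiftf ?n1 \<chi>2))"
      using 1(5)[OF xs t1] 2(5)[OF xs t2] by (simp add: shiftf_sat)
  qed
qed

lemma PB_union: "PB E m S \<Longrightarrow> PB E m S' \<Longrightarrow> PB E m (S \<union> S')"
  using PB_compl[OF PB_int[OF PB_compl PB_compl]] by (metis Compl_Int double_compl)

lemma PB_atom:
  assumes "set fs \<subseteq> E" "length idx = length fs" "\<forall>i\<in>set idx. i < m"
  shows "PB E m {xs. sum_list (map2 (\<lambda>f i. f (xs!i)) fs idx) = (0::'x::ab_group_add)}"
  unfolding PB_def
proof (intro exI conjI allI impI)
  show "set fs \<subseteq> E" "length idx = length fs" "\<forall>i\<in>set idx. i < m" by fact+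
  show "wf_fm gar (FEq (sumt (length fs)) (App GZero []))" by (simp add: sumt_wf)
  fix xs :: "'a list" and t :: "nat \<Rightarrow> 'x"
  assume "\<forall>j<length fs. t j = map2 (\<lambda>f i. f (xs!i)) fs idx ! j"
  then have "sum_list (map2 (\<lambda>f i. f (xs!i)) fs idx) = (\<Sum>j<length fs. t j)"
    using assms(2) by (simp add: sum_list_sum_nth atLeast0LessThan)
  then show "(xs \<in> {xs. sum_list (map2 (\<lambda>f i. f (xs!i)) fs idx) = 0}) =
     sat (grp_struct TYPE('x)) t (FEq (sumt (length fs)) (App GZero []))"
    by (simp add: grp_struct_def sumt_eval)
qed

lemma PB_ltd:
  fixes M :: "('y, 'f) struct" and E :: "('y \<Rightarrow> 'x::ab_group_add) set"
  assumes "\<And>m D. definable arM M m D \<Longrightarrow> \<exists>S. PB E m S \<and> D = {xs. length xs = m \<and> set xs \<subseteq> fst M \<and> xs \<in> S}"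
  shows "loc_trace_defines gar (grp_struct TYPE('x::ab_group_add)) arM M"
  unfolding loc_trace_defines_def
proof (intro exI[of _ E] conjI allI impI ballI)
  show "\<And>f. f \<in> E \<Longrightarrow> f ` fst M \<subseteq> fst (grp_struct TYPE('x))" by (simp add: grp_struct_def)
  fix m D assume "definable arM M m D"
  then obtain S where S: "PB E m S" "D = {xs. length xs = m \<and> set xs \<subseteq> fst M \<and> xs \<in> S}"
    using assms by blast
  obtain fs idx \<chi> where 1: "set fs \<subseteq> E" "length idx = length fs" "\<forall>i\<in>set idx. i < m"
     "wf_fm gar \<chi>" "\<And>xs t. length xs = m \<Longrightarrow> (\<forall>j < length fs. t j = map2 (\<lambda>f i. f (xs!i)) fs idx ! j) \<Longrightarrow>
        (xs \<in> S \<longleftrightarrow> sat (grp_struct TYPE('x)) t \<chi>)"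
    using S(1) unfolding PB_def by metis
  define Y where "Y = {ys. length ys = length fs \<and> set ys \<subseteq> fst (grp_struct TYPE('x)) \<and>
     sat (grp_struct TYPE('x)) (\<lambda>j. if j < length fs then ys ! j else 0) \<chi>}"
  show "\<exists>fs idx Y. length idx = length fs \<and> set fs \<subseteq> E \<and> (\<forall>i\<in>set idx. i < m) \<and>
           definable gar (grp_struct TYPE('x)) (length fs) Y \<and>
           D = {xs. length xs = m \<and> set xs \<subseteq> fst M \<and> map2 (\<lambda>f i. f (xs ! i)) fs idx \<in> Y}"
  proof (intro exI conjI)
    show "length idx = length fs" "set fs \<subseteq> E" "\<forall>i\<in>set idx. i < m" by fact+
    show "definable gar (grp_struct TYPE('x)) (length fs) Y"
      unfolding definable_def Y_def
      by (rule exI[of _ \<chi>], rule exI[of _ "\<lambda>_. 0"]) (simp add: 1(4) grp_struct_def)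
    have key: "xs \<in> S \<longleftrightarrow> sat (grp_struct TYPE('x)) (\<lambda>j. if j < length fs then map2 (\<lambda>f i. f (xs ! i)) fs idx ! j else 0) \<chi>"
      if "length xs = m" for xs
      by (rule 1(5)[OF that]) simp
    show "D = {xs. length xs = m \<and> set xs \<subseteq> fst M \<and> map2 (\<lambda>f i. f (xs ! i)) fs idx \<in> Y}"
      unfolding S(2) Y_def using 1(2) key by (auto simp: grp_struct_def)
  qed
qed

lemma map2_map_map: "map2 g (map F L) (map G L) = map (\<lambda>x. g (F x) (G x)) L"
  by (induction L) auto

lemma PB_qf:
  fixes sc :: "'k::division_ring \<Rightarrow> 'y::ab_group_add \<Rightarrow> 'y" and \<psi> :: "'y \<Rightarrow> 'x::ab_group_add"
  assumes vs: "is_vector_space sc" and add: "\<And>a b. \<psi> (a + b) = \<psi> a + \<psi> b" and inj: "inj \<psi>"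
    and m: "m > 0"
    and E: "E = range (\<lambda>c x. \<psi> (sc c x)) \<union> range (\<lambda>b _. b)"
  shows "PB E m {xs. qsat sc (\<lambda>i. if i < m then xs ! i else p i) Q}"
proof (induction Q)
  case (QAt L)
  have z: "\<psi> 0 = 0" using add[of 0 0] by simp
  have sl: "sum_list (map \<psi> xs) = \<psi> (sum_list xs)" for xs
    by (induction xs) (auto simp: z add)
  define fs where "fs = map (\<lambda>(i,c). if i < m then (\<lambda>x. \<psi> (sc c x)) else (\<lambda>_. \<psi> (sc c (p i)))) L"
  define idx where "idx = map (\<lambda>(i,c). if i < m then i else 0) L"
  have a: "PB E m {xs. sum_list (map2 (\<lambda>f i. f (xs!i)) fs idx) = 0}"
    by (rule PB_atom) (auto simp: fs_def idx_def E m)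
  show ?case
  proof (rule PB_cong[OF a])
    fix xs :: "'y list" assume "length xs = m"
    have "map2 (\<lambda>f i. f (xs!i)) fs idx = map (\<psi> \<circ> (\<lambda>(i,c). sc c (if i < m then xs ! i else p i))) L"
      unfolding fs_def idx_def map2_map_map by (auto split: prod.splits)
    then have "sum_list (map2 (\<lambda>f i. f (xs!i)) fs idx) = \<psi> (evl sc (\<lambda>i. if i < m then xs ! i else p i) L)"
      by (simp add: sl[symmetric] evl_def)
    then show "(xs \<in> {xs. sum_list (map2 (\<lambda>f i. f (xs!i)) fs idx) = 0}) =
      (xs \<in> {xs. qsat sc (\<lambda>i. if i < m then xs ! i else p i) (QAt L)})"
      using injD[OF inj, of _ 0] z by auto
  qed
next
  case (QNot Q)
  then show ?case by (rule PB_cong[OF PB_compl]) auto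
next
  case (QAnd Q1 Q2)
  then show ?case by (rule PB_cong[OF PB_int]) auto
qed

lemma ltd_grp_emb:
  fixes sc :: "'k::division_ring \<Rightarrow> 'y::ab_group_add \<Rightarrow> 'y" and \<psi> :: "'y \<Rightarrow> 'x::ab_group_add"
  assumes vs: "is_vector_space sc" and inf: "infinite (UNIV :: 'y set)"
    and add: "\<And>a b. \<psi> (a + b) = \<psi> a + \<psi> b" and inj: "inj \<psi>"
  shows "loc_trace_defines gar (grp_struct TYPE('x)) var (vs_struct sc)"
proof (rule PB_ltd[where E = "range (\<lambda>c x. \<psi> (sc c x)) \<union> range (\<lambda>b _. b)"])
  fix m D assume "definable var (vs_struct sc) m D"
  then obtain \<phi> p where \<phi>: "wf_fm var \<phi>" "D = {xs. length xs = m \<and> set xs \<subseteq> fst (vs_struct sc) \<and>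
              sat (vs_struct sc) (\<lambda>i. if i < m then xs ! i else p i) \<phi>}"
    unfolding definable_def by blast
  let ?S = "{xs. qsat sc (\<lambda>i. if i < m then xs ! i else p i) (fm2qf \<phi>)}"
  have "PB (range (\<lambda>c x. \<psi> (sc c x)) \<union> range (\<lambda>b _. b)) m ?S"
  proof (cases "m = 0")
    case True show ?thesis unfolding True by (rule PB_m0)
  next
    case False then show ?thesis using PB_qf[OF vs add inj] by simp
  qed
  moreover have "D = {xs. length xs = m \<and> set xs \<subseteq> fst (vs_struct sc) \<and> xs \<in> ?S}"
    unfolding \<phi>(2) using fm2qf_correct[OF vs inf \<phi>(1)] by simp
  ultimately show "\<exists>S. PB (range (\<lambda>c x. \<psi> (sc c x)) \<union> range (\<lambda>b _. b)) m S \<and>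
     D = {xs. length xs = m \<and> set xs \<subseteq> fst (vs_struct sc) \<and> xs \<in> S}" by blast
qed

lemma ltd_grp_finite:
  fixes sc :: "'k \<Rightarrow> 'v::ab_group_add \<Rightarrow> 'v"
  assumes fin: "finite (UNIV :: 'v set)"
  shows "loc_trace_defines gar (grp_struct TYPE('v)) arM (M :: ('v, 'f) struct)"
proof -
  define a0 where "a0 = (SOME a::'v. a \<noteq> 0)"
  define E where "E = range (\<lambda>u (x::'v). if x = u then 0 else a0)"
  have key: "(x = u) \<longleftrightarrow> (if x = u then 0 else a0) = 0" for x u :: 'v
  proof (cases "x = u")
    case False
    then have "\<exists>a::'v. a \<noteq> 0" by (metis eq_iff_diff_eq_0)
    then have "a0 \<noteq> 0" unfolding a0_def by (rule someI_ex)
    then show ?thesis using False by simp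
  qed simp
  have cube: "PB E m {xs. \<forall>i<k. xs ! i = u ! i}" if "k \<le> m" for m k and u :: "'v list"
    using that
  proof (induction k)
    case 0 show ?case by (rule PB_cong[OF PB_true]) auto
  next
    case (Suc k)
    have "PB E m {xs. sum_list (map2 (\<lambda>f i. f (xs!i)) [\<lambda>x. if x = u ! k then 0 else a0] [k]) = 0}"
      by (rule PB_atom) (use Suc in \<open>auto simp: E_def\<close>)
    then have "PB E m {xs. xs ! k = u ! k}"
      by (rule PB_cong) (simp add: key[symmetric])
    then have "PB E m ({xs. \<forall>i<k. xs ! i = u ! i} \<inter> {xs. xs ! k = u ! k})"
      using Suc by (intro PB_int) auto
    then show ?case by (rule PB_cong) (auto simp: less_Suc_eq)
  qed
  have single: "PB E m {u}" for m u
  proof (cases "length u = m")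
    case True
    show ?thesis using cube[of m m u]
      by (rule PB_cong) (use True in \<open>auto intro: nth_equalityI\<close>)
  next
    case False show ?thesis by (rule PB_cong[OF PB_false]) (use False in auto)
  qed
  have finPB: "finite F \<Longrightarrow> PB E m F" for F m
  proof (induction F rule: finite_induct)
    case empty then show ?case by (rule PB_false)
  next
    case (insert u F)
    then show ?case using PB_union[OF single[of m u]] by simp
  qed
  show ?thesis
  proof (rule PB_ltd[where E = E])
    fix m D assume "definable arM M m D"
    then have D: "D = {xs. length xs = m \<and> set xs \<subseteq> fst M \<and> xs \<in> D}" unfolding definable_def by auto
    have "D \<subseteq> {xs. set xs \<subseteq> UNIV \<and> length xs = m}" using D by auto
    then have "finite D" using finite_lists_length_eq[OF fin] finite_subset by blast
    then show "\<exists>S. PB E m S \<and> D = {xs. length xs = m \<and> set xs \<subseteq> fst M \<and> xs \<in> S}"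
      using finPB D by blast
  qed
qed


fun g2v :: "gsym \<Rightarrow> 'e vsym" where
  "g2v GAdd = VAdd" | "g2v GNeg = VNeg" | "g2v GZero = VZero"

lemma eval_g2v: "eval_trm (vinterp sc) s (map_trm g2v t) = eval_trm ginterp s t"
proof (induction t)
  case (App f ts)
  then have h: "map (eval_trm (vinterp sc) s \<circ> map_trm g2v) ts = map (eval_trm ginterp s) ts"
    by simp
  then show ?case by (cases f) (simp_all add: h)
qed simp

lemma wf_g2v: "wf_trm var (map_trm (g2v :: gsym \<Rightarrow> 'e vsym) t) = wf_trm gar t"
proof (induction t)
  case (App f ts)
  then show ?case by (cases f) (auto simp: list_all_iff)
qed simp

lemma sat_g2v: "sat (vs_struct (sc :: 'e \<Rightarrow> 'x \<Rightarrow> 'x)) s (map_fm g2v \<phi>) = sat (grp_struct TYPE('x::ab_group_add)) s \<phi>"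
  by (induction \<phi> arbitrary: s) (auto simp: vs_struct_def grp_struct_def eval_g2v)

lemma wff_g2v: "wf_fm var (map_fm (g2v :: gsym \<Rightarrow> 'e vsym) \<phi>) = wf_fm gar \<phi>"
  by (induction \<phi>) (auto simp: wf_g2v)

lemma definable_g2v:
  assumes "definable gar (grp_struct TYPE('x::ab_group_add)) n Y"
  shows "definable var (vs_struct (sc :: 'e \<Rightarrow> 'x \<Rightarrow> 'x)) n Y"
proof -
  obtain \<phi> p where "wf_fm gar \<phi>" "range p \<subseteq> fst (grp_struct TYPE('x))"
    "Y = {xs. length xs = n \<and> set xs \<subseteq> fst (grp_struct TYPE('x)) \<and>
              sat (grp_struct TYPE('x)) (\<lambda>i. if i < n then xs ! i else p i) \<phi>}"
    using assms unfolding definable_def by blast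
  then show ?thesis unfolding definable_def
    by (intro exI[of _ "map_fm g2v \<phi>"] exI[of _ p])
       (simp add: wff_g2v sat_g2v, simp add: vs_struct_def grp_struct_def)
qed

lemma ltd_g2v:
  assumes "loc_trace_defines gar (grp_struct TYPE('x::ab_group_add)) arM M"
  shows "loc_trace_defines var (vs_struct (sc :: 'e \<Rightarrow> 'x \<Rightarrow> 'x)) arM M"
proof -
  obtain E where E: "\<forall>f\<in>E. f ` fst M \<subseteq> fst (grp_struct TYPE('x))"
     "\<forall>m D. definable arM M m D \<longrightarrow>
        (\<exists>fs idx Y. length idx = length fs \<and> set fs \<subseteq> E \<and> (\<forall>i\<in>set idx. i < m) \<and>
           definable gar (grp_struct TYPE('x)) (length fs) Y \<and>
           D = {xs. length xs = m \<and> set xs \<subseteq> fst M \<and> map2 (\<lambda>f i. f (xs ! i)) fs idx \<in> Y})"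
    using assms unfolding loc_trace_defines_def by blast
  show ?thesis unfolding loc_trace_defines_def
  proof (intro exI[of _ E] conjI allI impI ballI)
    show "\<And>f. f \<in> E \<Longrightarrow> f ` fst M \<subseteq> fst (vs_struct sc)" by (simp add: vs_struct_def)
    fix m D assume "definable arM M m D"
    then obtain fs idx Y where "length idx = length fs \<and> set fs \<subseteq> E \<and> (\<forall>i\<in>set idx. i < m) \<and>
           definable gar (grp_struct TYPE('x)) (length fs) Y \<and>
           D = {xs. length xs = m \<and> set xs \<subseteq> fst M \<and> map2 (\<lambda>f i. f (xs ! i)) fs idx \<in> Y}"
      using E(2)[rule_format, OF \<open>definable arM M m D\<close>] by (elim exE) (rule that, assumption)
    then show "\<exists>fs idx Y. length idx = length fs \<and> set fs \<subseteq> E \<and> (\<forall>i\<in>set idx. i < m) \<and>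
           definable var (vs_struct sc) (length fs) Y \<and>
           D = {xs. length xs = m \<and> set xs \<subseteq> fst M \<and> map2 (\<lambda>f i. f (xs ! i)) fs idx \<in> Y}"
      using definable_g2v by blast
  qed
qed

lemma map2_id: "length xs = m \<Longrightarrow> map2 (\<lambda>f i. f (xs ! i)) (replicate m id) [0..<m] = xs"
  by (rule nth_equalityI) auto

lemma ltd_refl: "loc_trace_defines ar M ar M"
  unfolding loc_trace_defines_def
proof (intro exI[of _ "{id}"] conjI allI impI ballI)
  fix m D assume d: "definable ar M m D"
  then have D: "\<forall>xs\<in>D. length xs = m \<and> set xs \<subseteq> fst M" unfolding definable_def by auto
  show "\<exists>fs idx Y. length idx = length fs \<and> set fs \<subseteq> {id} \<and> (\<forall>i\<in>set idx. i < m) \<and>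
           definable ar M (length fs) Y \<and>
           D = {xs. length xs = m \<and> set xs \<subseteq> fst M \<and> map2 (\<lambda>f i. f (xs ! i)) fs idx \<in> Y}"
  proof (intro exI[of _ "replicate m id"] exI[of _ "[0..<m]"] exI[of _ D] conjI)
    show "definable ar M (length (replicate m id)) D" using d by simp
    show "D = {xs. length xs = m \<and> set xs \<subseteq> fst M \<and> map2 (\<lambda>f i. f (xs ! i)) (replicate m id) [0..<m] \<in> D}"
    proof (intro set_eqI iffI)
      fix xs assume x: "xs \<in> D"
      then have "length xs = m" using D by auto
      then show "xs \<in> {xs. length xs = m \<and> set xs \<subseteq> fst M \<and> map2 (\<lambda>f i. f (xs ! i)) (replicate m id) [0..<m] \<in> D}"
        using D map2_id[of xs m] x by auto
    next
      fix xs assume a: "xs \<in> {xs. length xs = m \<and> set xs \<subseteq> fst M \<and> map2 (\<lambda>f i. f (xs ! i)) (replicate m id) [0..<m] \<in> D}"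
      then have "length xs = m" "map2 (\<lambda>f i. f (xs ! i)) (replicate m id) [0..<m] \<in> D" by auto
      with map2_id[OF this(1)] show "xs \<in> D" by simp
    qed
  qed auto
qed auto

lemma ee_refl: "elem_equiv ar M M" unfolding elem_equiv_def by auto

lemma ee_trans:
  assumes a: "elem_equiv ar A B" and b: "elem_equiv ar B C" shows "elem_equiv ar A C"
  unfolding elem_equiv_def
proof (intro allI impI)
  fix \<phi> assume h: "wf_fm ar \<phi> \<and> fv_fm \<phi> = {}"
  show "(\<exists>s. range s \<subseteq> fst A \<and> sat A s \<phi>) = (\<exists>s. range s \<subseteq> fst C \<and> sat C s \<phi>)"
    using a[unfolded elem_equiv_def, rule_format, OF h] b[unfolded elem_equiv_def, rule_format, OF h]
    by (rule trans)
qed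

lemma is_struct_vs: "is_struct var (vs_struct sc)" by (simp add: is_struct_def vs_struct_def)
lemma is_struct_grp: "is_struct gar (grp_struct TYPE('x::ab_group_add))" by (simp add: is_struct_def grp_struct_def)

theorem part1:
  fixes sc :: "'k::division_ring \<Rightarrow> 'v::ab_group_add \<Rightarrow> 'v"
  assumes vs: "is_vector_space sc"
  shows "loc_trace_equiv TYPE('v) TYPE('v) var (vs_struct sc) gar (grp_struct TYPE('v))"
proof -
  have 1: "th_loc_trace_defines TYPE('v) TYPE('v) var (vs_struct sc) gar (grp_struct TYPE('v))"
    unfolding th_loc_trace_defines_def
    by (intro exI[of _ "vs_struct sc"] exI[of _ "grp_struct TYPE('v)"] conjI is_struct_vs is_struct_grp
        ee_refl ltd_g2v ltd_refl)
  have l: "loc_trace_defines gar (grp_struct TYPE('v)) var (vs_struct sc)"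
  proof (cases "finite (UNIV :: 'v set)")
    case True then show ?thesis by (rule ltd_grp_finite)
  next
    case False then show ?thesis using ltd_grp_emb[OF vs False, of id] by simp
  qed
  have 2: "th_loc_trace_defines TYPE('v) TYPE('v) gar (grp_struct TYPE('v)) var (vs_struct sc)"
    unfolding th_loc_trace_defines_def
    by (intro exI[of _ "grp_struct TYPE('v)"] exI[of _ "vs_struct sc"] conjI is_struct_vs is_struct_grp
        ee_refl l)
  show ?thesis using 1 2 unfolding loc_trace_equiv_def by blast
qed

definition transp :: "('x \<Rightarrow> 'T) \<Rightarrow> ('x, 'f) struct \<Rightarrow> ('T, 'f) struct" where
  "transp h M = (range h, \<lambda>f xs. h (snd M f (map (inv h) xs)))"

lemma eval_transp:
  assumes "inj h" "range s \<subseteq> range h"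
  shows "eval_trm (snd (transp h M)) s t = h (eval_trm (snd M) ((\<lambda>n. inv h (s n))) t)"
proof (induction t)
  case (Var n)
  have "s n \<in> range h" using assms(2) by auto
  then show ?case by (auto simp: transp_def f_inv_into_f)
next
  case (App f ts)
  have eq: "map (inv h \<circ> eval_trm (snd (transp h M)) s) ts = map (eval_trm (snd M) (\<lambda>n. inv h (s n))) ts"
    by (rule map_cong) (simp_all add: App.IH inv_f_f[OF assms(1)])
  have ta: "snd (transp h M) f L = h (snd M f (map (inv h) L))" for L by (simp add: transp_def)
  have "eval_trm (snd (transp h M)) s (App f ts) = snd (transp h M) f (map (eval_trm (snd (transp h M)) s) ts)"
    by (rule eval_trm.simps(2))
  also have "\<dots> = h (snd M f (map (inv h) (map (eval_trm (snd (transp h M)) s) ts)))" by (rule ta)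
  also have "\<dots> = h (snd M f (map (eval_trm (snd M) (\<lambda>n. inv h (s n))) ts))"
    by (simp only: map_map eq)
  finally show ?case by simp
qed

lemma sat_transp:
  assumes "inj h" "range s \<subseteq> range h" "fst M = UNIV"
  shows "sat (transp h M) s \<phi> = sat M ((\<lambda>n. inv h (s n))) \<phi>"
  using assms(2)
proof (induction \<phi> arbitrary: s)
  case (FEq t u) then show ?case by (simp add: eval_transp[OF assms(1) FEq.prems] inj_eq[OF assms(1)])
next
  case (FEx n \<phi>)
  have "(\<exists>a\<in>range h. sat (transp h M) (s(n := a)) \<phi>) = (\<exists>b. sat (transp h M) (s(n := h b)) \<phi>)" by auto
  also have "\<dots> = (\<exists>b. sat M (((\<lambda>n. inv h (s n)))(n := b)) \<phi>)"
  proof -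
    have "\<And>b. range (s(n := h b)) \<subseteq> range h" using FEx.prems by auto
    moreover have "\<And>b. (\<lambda>m. inv h ((s(n := h b)) m)) = ((\<lambda>n. inv h (s n)))(n := b)" using assms(1) by auto
    ultimately show ?thesis using FEx.IH by simp
  qed
  finally show ?case using assms(3) by (simp add: transp_def)
qed auto

lemma is_struct_transp: "is_struct ar (transp h M)"
  by (auto simp: is_struct_def transp_def)

lemma ee_transp:
  assumes "inj h" "fst M = UNIV"
  shows "elem_equiv ar M (transp h M)"
  unfolding elem_equiv_def
proof (intro allI impI iffI)
  fix \<phi> assume "wf_fm ar \<phi> \<and> fv_fm \<phi> = {}"
  { assume "\<exists>s. range s \<subseteq> fst M \<and> sat M s \<phi>"
    then obtain s where "sat M s \<phi>" by blast
    moreover have "range (h \<circ> s) \<subseteq> range h" by auto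
    ultimately have "sat (transp h M) (h \<circ> s) \<phi>"
      by (simp add: sat_transp[OF assms(1) _ assms(2)] inv_f_f[OF assms(1)])
    then show "\<exists>s. range s \<subseteq> fst (transp h M) \<and> sat (transp h M) s \<phi>"
      by (intro exI[of _ "h \<circ> s"]) (auto simp: transp_def) }
  { assume "\<exists>s. range s \<subseteq> fst (transp h M) \<and> sat (transp h M) s \<phi>"
    then obtain s where "range s \<subseteq> range h" "sat (transp h M) s \<phi>" by (auto simp: transp_def)
    then show "\<exists>s. range s \<subseteq> fst M \<and> sat M s \<phi>" using assms(2) sat_transp[OF assms(1) _ assms(2)] by auto }
qed


lemma fst_transp: "fst (transp h M) = range h" by (simp add: transp_def)

lemma map2_transp:
  assumes "\<forall>i\<in>set idx. i < length xs"
  shows "map2 (\<lambda>f i. f (xs ! i)) (map (\<lambda>f. hN \<circ> f \<circ> inv hM) fs) idx =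
         map hN (map2 (\<lambda>f i. f (map (inv hM) xs ! i)) fs idx)"
  using assms by (intro nth_equalityI) auto

lemma ltd_transp:
  fixes N :: "('x, 'g) struct" and M :: "('y, 'f) struct" and hN :: "'x \<Rightarrow> 'T" and hM :: "'y \<Rightarrow> 'S"
  assumes iN: "inj hN" and iM: "inj hM" and uN: "fst N = UNIV" and uM: "fst M = UNIV"
    and ltd: "loc_trace_defines arN N arM M"
  shows "loc_trace_defines arN (transp hN N) arM (transp hM M)"
proof -
  obtain E where E: "\<forall>f\<in>E. f ` fst M \<subseteq> fst N"
     "\<forall>m D. definable arM M m D \<longrightarrow>
        (\<exists>fs idx Y. length idx = length fs \<and> set fs \<subseteq> E \<and> (\<forall>i\<in>set idx. i < m) \<and>
           definable arN N (length fs) Y \<and>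
           D = {xs. length xs = m \<and> set xs \<subseteq> fst M \<and> map2 (\<lambda>f i. f (xs ! i)) fs idx \<in> Y})"
    using ltd unfolding loc_trace_defines_def by blast
  show ?thesis unfolding loc_trace_defines_def
  proof (intro exI[of _ "(\<lambda>f. hN \<circ> f \<circ> inv hM) ` E"] conjI allI impI ballI)
    show "\<And>f. f \<in> (\<lambda>f. hN \<circ> f \<circ> inv hM) ` E \<Longrightarrow> f ` fst (transp hM M) \<subseteq> fst (transp hN N)"
      by (auto simp: transp_def)
    fix m D' assume "definable arM (transp hM M) m D'"
    then obtain \<phi> p where \<phi>: "wf_fm arM \<phi>" "range p \<subseteq> range hM"
      "D' = {xs. length xs = m \<and> set xs \<subseteq> range hM \<and> sat (transp hM M) (\<lambda>i. if i < m then xs ! i else p i) \<phi>}"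
      unfolding definable_def by (auto simp: transp_def)
    define D where "D = {ys. length ys = m \<and> set ys \<subseteq> fst M \<and> sat M (\<lambda>i. if i < m then ys ! i else inv hM (p i)) \<phi>}"
    have "definable arM M m D" unfolding definable_def D_def
      by (intro exI[of _ \<phi>] exI[of _ "\<lambda>i. inv hM (p i)"]) (simp add: \<phi>(1) uM)
    from E(2)[rule_format, OF this] obtain fs idx Y where F: "length idx = length fs" "set fs \<subseteq> E" "\<forall>i\<in>set idx. i < m"
           "definable arN N (length fs) Y"
           "D = {xs. length xs = m \<and> set xs \<subseteq> fst M \<and> map2 (\<lambda>f i. f (xs ! i)) fs idx \<in> Y}"
      by blast
    let ?n = "length fs"
    obtain \<chi> q where \<chi>: "wf_fm arN \<chi>"
      "Y = {zs. length zs = ?n \<and> set zs \<subseteq> fst N \<and> sat N (\<lambda>j. if j < ?n then zs ! j else q j) \<chi>}"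
      using F(4) unfolding definable_def by blast
    define Y' where "Y' = {zs. length zs = ?n \<and> set zs \<subseteq> fst (transp hN N) \<and>
       sat (transp hN N) (\<lambda>j. if j < ?n then zs ! j else hN (q j)) \<chi>}"
    show "\<exists>fs idx Y. length idx = length fs \<and> set fs \<subseteq> (\<lambda>f. hN \<circ> f \<circ> inv hM) ` E \<and> (\<forall>i\<in>set idx. i < m) \<and>
           definable arN (transp hN N) (length fs) Y \<and>
           D' = {xs. length xs = m \<and> set xs \<subseteq> fst (transp hM M) \<and> map2 (\<lambda>f i. f (xs ! i)) fs idx \<in> Y}"
    proof (intro exI[of _ "map (\<lambda>f. hN \<circ> f \<circ> inv hM) fs"] exI[of _ idx] exI[of _ Y'] conjI)
      show "length idx = length (map (\<lambda>f. hN \<circ> f \<circ> inv hM) fs)" using F(1) by simp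
      show "set (map (\<lambda>f. hN \<circ> f \<circ> inv hM) fs) \<subseteq> (\<lambda>f. hN \<circ> f \<circ> inv hM) ` E" using F(2) by auto
      show "\<forall>i\<in>set idx. i < m" by fact
      show "definable arN (transp hN N) (length (map (\<lambda>f. hN \<circ> f \<circ> inv hM) fs)) Y'"
        unfolding definable_def Y'_def
        by (intro exI[of _ \<chi>] exI[of _ "\<lambda>j. hN (q j)"]) (auto simp: \<chi>(1) transp_def)
      show "D' = {xs. length xs = m \<and> set xs \<subseteq> fst (transp hM M) \<and>
                 map2 (\<lambda>f i. f (xs ! i)) (map (\<lambda>f. hN \<circ> f \<circ> inv hM) fs) idx \<in> Y'}"
      proof (intro set_eqI)
        fix xs :: "'S list"
        show "xs \<in> D' \<longleftrightarrow> xs \<in> {xs. length xs = m \<and> set xs \<subseteq> fst (transp hM M) \<and>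
                 map2 (\<lambda>f i. f (xs ! i)) (map (\<lambda>f. hN \<circ> f \<circ> inv hM) fs) idx \<in> Y'}"
        proof (cases "length xs = m \<and> set xs \<subseteq> range hM")
          case False then show ?thesis using \<phi>(3) by (auto simp: transp_def)
        next
          case True
          let ?L = "map2 (\<lambda>f i. f (map (inv hM) xs ! i)) fs idx"
          have r1: "range (\<lambda>i. if i < m then xs ! i else p i) \<subseteq> range hM"
            using True \<phi>(2) by (auto simp: subset_iff)
          have "xs \<in> D' \<longleftrightarrow> sat M (\<lambda>n. inv hM (if n < m then xs ! n else p n)) \<phi>"
            using True \<phi>(3) sat_transp[OF iM r1 uM] by simp
          also have "(\<lambda>n. inv hM (if n < m then xs ! n else p n)) =
                     (\<lambda>i. if i < m then map (inv hM) xs ! i else inv hM (p i))"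
            using True by auto
          also have "sat M \<dots> \<phi> \<longleftrightarrow> map (inv hM) xs \<in> D"
            unfolding D_def using True uM by simp
          also have "\<dots> \<longleftrightarrow> ?L \<in> Y" unfolding F(5) using True uM by simp
          also have "\<dots> \<longleftrightarrow> sat N (\<lambda>j. if j < ?n then ?L ! j else q j) \<chi>"
            unfolding \<chi>(2) using F(1) uN by simp
          also have "\<dots> \<longleftrightarrow> map hN ?L \<in> Y'"
          proof -
            have r2: "range (\<lambda>j. if j < ?n then map hN ?L ! j else hN (q j)) \<subseteq> range hN"
              using F(1) by (auto simp: subset_iff simp del: map_map)
            have eqn: "(\<lambda>j. inv hN (if j < ?n then map hN ?L ! j else hN (q j))) = (\<lambda>j. if j < ?n then ?L ! j else q j)"
              using F(1) by (auto simp: inv_f_f[OF iN])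
            have s: "sat (transp hN N) (\<lambda>j. if j < ?n then map hN ?L ! j else hN (q j)) \<chi> =
                     sat N (\<lambda>j. if j < ?n then ?L ! j else q j) \<chi>"
              by (subst sat_transp[OF iN r2 uN]) (subst eqn, rule refl)
            have "map hN ?L \<in> Y' \<longleftrightarrow> sat (transp hN N) (\<lambda>j. if j < ?n then map hN ?L ! j else hN (q j)) \<chi>"
              unfolding Y'_def fst_transp using F(1) by (auto simp del: map_map)
            then show ?thesis using s by simp
          qed
          also have "map hN ?L = map2 (\<lambda>f i. f (xs ! i)) (map (\<lambda>f. hN \<circ> f \<circ> inv hM) fs) idx"
            using map2_transp[of idx xs hN hM fs] True F(3) by simp
          finally show ?thesis using True by (simp add: transp_def)
        qed
      qed
    qed
  qed
qed


definition qv :: "int \<times> int \<Rightarrow> 'a::division_ring" where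
  "qv u = of_int (fst u) * inverse (of_int (snd u))"

definition qz :: "int \<Rightarrow> int \<times> int \<Rightarrow> bool" where
  "qz p u \<longleftrightarrow> p dvd fst u \<or> p dvd snd u"

definition qadd :: "int \<Rightarrow> int \<times> int \<Rightarrow> int \<times> int \<Rightarrow> int \<times> int" where
  "qadd p u v = (if p dvd snd u then v else if p dvd snd v then u
      else (fst u * snd v + fst v * snd u, snd u * snd v))"

definition qneg :: "int \<times> int \<Rightarrow> int \<times> int" where "qneg u = (- fst u, snd u)"
definition qmul :: "int \<times> int \<Rightarrow> int \<times> int \<Rightarrow> int \<times> int" where
  "qmul u v = (fst u * fst v, snd u * snd v)"
definition qinv :: "int \<times> int \<Rightarrow> int \<times> int" where "qinv u = (snd u, fst u)"

lemma oi_comm: "(of_int a :: 'a::ring_1) * of_int b = of_int b * of_int a"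
  by (metis mult.commute of_int_mult)

lemma oi_inv_comm: "inverse (of_int b :: 'a::division_ring) * of_int a = of_int a * inverse (of_int b)"
  by (rule mult_commute_imp_mult_inverse_commute) (rule oi_comm)

lemma oi_zero: "(of_int n :: 'a::division_ring) = 0 \<longleftrightarrow> int CHAR('a) dvd n"
  by (rule of_int_eq_0_iff_char_dvd)

lemma qv_zero: "(qv u :: 'a::division_ring) = 0 \<longleftrightarrow> qz (int CHAR('a)) u"
  by (simp add: qv_def qz_def oi_zero)

lemma qv_neg: "(qv (qneg u) :: 'a::division_ring) = - qv u"
  by (simp add: qv_def qneg_def)

lemma qv_add: "(qv (qadd (int CHAR('a)) u v) :: 'a::division_ring) = qv u + qv v"
proof -
  obtain a b c d where u: "u = (a, b)" and v: "v = (c, d)" by (cases u, cases v) auto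
  let ?A = "of_int a :: 'a" and ?B = "of_int b :: 'a" and ?C = "of_int c :: 'a" and ?D = "of_int d :: 'a"
  show ?thesis
  proof (cases "?B = 0 \<or> ?D = 0")
    case True then show ?thesis by (auto simp: qadd_def qv_def u v oi_zero[symmetric])
  next
    case False
    then have nz: "?B \<noteq> 0" "?D \<noteq> 0" by auto
    have "qv (qadd (int CHAR('a)) u v) = (?A * ?D + ?C * ?B) * inverse (?B * ?D)"
      using nz by (simp add: qadd_def qv_def u v oi_zero[symmetric])
    also have "\<dots> = (?A * ?D + ?C * ?B) * (inverse ?D * inverse ?B)"
      using nz by (simp add: nonzero_inverse_mult_distrib)
    also have "\<dots> = ?A * (?D * inverse ?D) * inverse ?B + ?C * (?B * inverse ?D) * inverse ?B"
      by (simp only: distrib_right mult.assoc)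
    also have "?B * inverse ?D = inverse ?D * ?B" by (simp add: oi_inv_comm)
    also have "?A * (?D * inverse ?D) * inverse ?B + ?C * (inverse ?D * ?B) * inverse ?B
       = ?A * inverse ?B + ?C * inverse ?D * (?B * inverse ?B)"
    proof -
      have d1: "?D * inverse ?D = 1" "?B * inverse ?B = 1" using nz by simp_all
      show ?thesis by (simp add: d1 mult.assoc)
    qed
    also have "\<dots> = qv u + qv v" using nz by (simp add: qv_def u v)
    finally show ?thesis using nz by simp
  qed
qed

lemma qv_mul: "(qv (qmul u v) :: 'a::division_ring) = qv u * qv v"
proof -
  obtain a b c d where u: "u = (a, b)" and v: "v = (c, d)" by (cases u, cases v) auto
  let ?A = "of_int a :: 'a" and ?B = "of_int b :: 'a" and ?C = "of_int c :: 'a" and ?D = "of_int d :: 'a"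
  have "qv (qmul u v) = ?A * ?C * inverse (?B * ?D)" by (simp add: qmul_def qv_def u v)
  also have "inverse (?B * ?D) = inverse (?D * ?B)" by (simp add: oi_comm)
  also have "\<dots> = inverse ?B * inverse ?D"
    by (cases "?B = 0"; cases "?D = 0") (simp_all add: nonzero_inverse_mult_distrib)
  also have "?A * ?C * (inverse ?B * inverse ?D) = ?A * (?C * inverse ?B) * inverse ?D"
    by (simp add: mult.assoc)
  also have "?C * inverse ?B = inverse ?B * ?C" by (simp add: oi_inv_comm)
  finally show ?thesis by (simp add: qv_def u v mult.assoc)
qed

lemma qv_inv: "(qv u :: 'a::division_ring) \<noteq> 0 \<Longrightarrow> inverse (qv u) = (qv (qinv u) :: 'a)"
proof -
  obtain a b where u: "u = (a, b)" by (cases u) auto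
  let ?A = "of_int a :: 'a" and ?B = "of_int b :: 'a"
  assume "qv u \<noteq> (0::'a)"
  then have nz: "?A \<noteq> 0" "?B \<noteq> 0" by (auto simp: qv_def u)
  have "inverse (qv u) = inverse (inverse ?B) * inverse ?A"
    using nz by (simp add: qv_def u nonzero_inverse_mult_distrib)
  also have "\<dots> = ?B * inverse ?A" by simp
  finally show ?thesis by (simp add: qv_def qinv_def u)
qed

lemma qv_eq: "((qv u :: 'a::division_ring) = qv v) \<longleftrightarrow> qz (int CHAR('a)) (qadd (int CHAR('a)) u (qneg v))"
proof -
  have "(qv u = (qv v :: 'a)) \<longleftrightarrow> qv u + qv (qneg v) = (0::'a)" by (simp add: qv_neg)
  also have "\<dots> \<longleftrightarrow> qz (int CHAR('a)) (qadd (int CHAR('a)) u (qneg v))"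
    by (simp add: qv_add[symmetric] qv_zero)
  finally show ?thesis .
qed

lemma qv_transfer:
  assumes "CHAR('k::division_ring) = CHAR('l::division_ring)"
  shows "((qv u :: 'k) = qv v) \<longleftrightarrow> ((qv u :: 'l) = qv v)"
  using assms by (simp add: qv_eq)

lemma qv_transfer_add:
  assumes "CHAR('k::division_ring) = CHAR('l::division_ring)"
  shows "(qv (qadd (int CHAR('l)) u v) :: 'k) = qv u + qv v"
  using qv_add[where 'a='k] assms by simp

lemma qv_01: "qv (0, 1) = 0" "qv (1, 1) = 1" "qv (-1, 1) = -1"
  by (simp_all add: qv_def)


definition good :: "('l::division_ring \<Rightarrow> 'w::ab_group_add \<Rightarrow> 'w) \<Rightarrow> ('w \<times> ('w \<Rightarrow>\<^sub>0 'k::division_ring)) set \<Rightarrow> bool" where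
  "good sc G \<longleftrightarrow> (0, 0) \<in> G \<and>
     (\<forall>x a b. (x,a) \<in> G \<longrightarrow> (x,b) \<in> G \<longrightarrow> a = b) \<and>
     (\<forall>x y a. (x,a) \<in> G \<longrightarrow> (y,a) \<in> G \<longrightarrow> x = y) \<and>
     (\<forall>x a y b. (x,a) \<in> G \<longrightarrow> (y,b) \<in> G \<longrightarrow> (x + y, a + b) \<in> G) \<and>
     (\<forall>x a u. (x,a) \<in> G \<longrightarrow> sc (qv u) x \<in> Domain G) \<and>
     (\<forall>x a. (x,a) \<in> G \<longrightarrow> Poly_Mapping.keys a \<subseteq> Domain G)"

lemma chain_two:
  assumes "C \<in> chains S" "p \<in> \<Union>C" "q \<in> \<Union>C"
  shows "\<exists>G\<in>C. p \<in> G \<and> q \<in> G"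
proof -
  obtain G1 G2 where "G1 \<in> C" "G2 \<in> C" "p \<in> G1" "q \<in> G2" using assms(2,3) by blast
  then show ?thesis using chainsD[OF assms(1), of G1 G2] by blast
qed

lemma good_union:
  assumes C: "C \<in> chains {G. good sc G}" and ne: "C \<noteq> {}"
  shows "good sc (\<Union>C)"
proof -
  have g: "\<And>G. G \<in> C \<Longrightarrow> good sc G" using chainsD2[OF C] by blast
  note two = chain_two[OF C]
  show ?thesis unfolding good_def
  proof (intro conjI allI impI)
    show "(0, 0) \<in> \<Union>C" using ne g unfolding good_def by blast
    fix x a b assume "(x, a) \<in> \<Union>C" "(x, b) \<in> \<Union>C"
    then show "a = b" using two g unfolding good_def by metis
  next
    fix x y a assume "(x, a) \<in> \<Union>C" "(y, a) \<in> \<Union>C"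
    then show "x = y" using two g unfolding good_def by metis
  next
    fix x a y b assume "(x, a) \<in> \<Union>C" "(y, b) \<in> \<Union>C"
    then obtain G where "G \<in> C" "(x, a) \<in> G" "(y, b) \<in> G" using two by blast
    then show "(x + y, a + b) \<in> \<Union>C" using g unfolding good_def by blast
  next
    fix x a u assume "(x, a) \<in> \<Union>C"
    then obtain G where "G \<in> C" "(x, a) \<in> G" by blast
    then have "sc (qv u) x \<in> Domain G" using g unfolding good_def by blast
    then show "sc (qv u) x \<in> Domain (\<Union>C)" using \<open>G \<in> C\<close> by blast
  next
    fix x a assume "(x, a) \<in> \<Union>C"
    then obtain G where "G \<in> C" "(x, a) \<in> G" by blast
    then have "Poly_Mapping.keys a \<subseteq> Domain G" using g unfolding good_def by blast
    then show "Poly_Mapping.keys a \<subseteq> Domain (\<Union>C)" using \<open>G \<in> C\<close> by blast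
  qed
qed

lemma good_single: "is_vector_space sc \<Longrightarrow> good sc {(0, 0)}"
  by (auto simp: good_def vs_props)

lemma good_extend:
  fixes sc :: "'l::division_ring \<Rightarrow> 'w::ab_group_add \<Rightarrow> 'w" and G :: "('w \<times> ('w \<Rightarrow>\<^sub>0 'k::division_ring)) set"
  assumes vs: "is_vector_space sc" and ch: "CHAR('k) = CHAR('l)"
    and g: "good sc G" and w: "w \<notin> Domain G"
  shows "\<exists>G'. good sc G' \<and> G \<subseteq> G' \<and> G' \<noteq> G"
proof -
  note V = vs_props[OF vs]
  have G0: "(0,0) \<in> G" and Gf: "\<And>x a b. (x,a) \<in> G \<Longrightarrow> (x,b) \<in> G \<Longrightarrow> a = b"
    and Gi: "\<And>x y a. (x,a) \<in> G \<Longrightarrow> (y,a) \<in> G \<Longrightarrow> x = y"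
    and Ga: "\<And>x a y b. (x,a) \<in> G \<Longrightarrow> (y,b) \<in> G \<Longrightarrow> (x + y, a + b) \<in> G"
    and Gs: "\<And>x a u. (x,a) \<in> G \<Longrightarrow> sc (qv u) x \<in> Domain G"
    and Gk: "\<And>x a. (x,a) \<in> G \<Longrightarrow> Poly_Mapping.keys a \<subseteq> Domain G"
    using g unfolding good_def by blast+
  let ?p = "int CHAR('l)"
  have key: "(qv u :: 'l) = qv v"
    if xa: "(x,a) \<in> G" and yb: "(y,b) \<in> G" and e: "x + sc (qv u) w = y + sc (qv v) w" for x a y b u v
  proof (rule ccontr)
    assume ne: "(qv u :: 'l) \<noteq> qv v"
    define r where "r = qadd ?p u (qneg v)"
    have d: "(qv r :: 'l) = qv u - qv v" by (simp add: r_def qv_add qv_neg)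
    then have dnz: "(qv r :: 'l) \<noteq> 0" using ne by simp
    have "sc (qv r) w = sc (qv u + - qv v) w" using d by simp
    also have "\<dots> = sc (qv u) w + - sc (qv v) w" by (simp only: V(2) V(7))
    also have "\<dots> = (x + sc (qv u) w) - x - sc (qv v) w" by simp
    also have "\<dots> = (y + sc (qv v) w) - x - sc (qv v) w" using e by simp
    also have "\<dots> = y + - x" by simp
    finally have dw: "sc (qv r) w = y + - x" .
    obtain c where xc: "(- x, c) \<in> G" using Gs[OF xa, of "(-1, 1)"] by (auto simp: qv_01 V)
    have yx: "(y + - x, b + c) \<in> G" using Ga[OF yb xc] .
    have "w = sc (inverse (qv r) * qv r) w" using dnz by (simp add: V)
    also have "\<dots> = sc (qv (qinv r)) (y + - x)" using dw qv_inv[OF dnz] by (simp add: V)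
    finally have "w \<in> Domain G" using Gs[OF yx, of "qinv r"] by simp
    then show False using w by simp
  qed
  have tr: "((qv u :: 'k) = qv v) \<longleftrightarrow> ((qv u :: 'l) = qv v)" for u v
    by (rule qv_transfer[OF ch])
  define G' where "G' = {(x + sc (qv u) w, a + Poly_Mapping.single w (qv u :: 'k)) | x a u. (x, a) \<in> G}"
  have sub: "G \<subseteq> G'"
  proof
    fix z assume "z \<in> G"
    then obtain x a where z: "z = (x, a)" "(x, a) \<in> G" by (cases z) auto
    show "z \<in> G'" unfolding G'_def
      by (rule CollectI, rule exI[of _ x], rule exI[of _ a], rule exI[of _ "(0,1)"]) (simp add: z qv_01 V)
  qed
  have wG': "(w, Poly_Mapping.single w 1) \<in> G'" unfolding G'_def
    by (rule CollectI, rule exI[of _ 0], rule exI[of _ 0], rule exI[of _ "(1,1)"]) (simp add: G0 qv_01 V)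
  have lk: "Poly_Mapping.lookup a w = 0" if "(x, a) \<in> G" for x a
    using Gk[OF that] w by (meson not_in_keys_iff_lookup_eq_zero subsetD)
  have "good sc G'"
    unfolding good_def
  proof (intro conjI allI impI)
    show "(0, 0) \<in> G'" using sub G0 by blast
  next
    fix z a1 a2 assume h: "(z, a1) \<in> G'" "(z, a2) \<in> G'"
    then obtain x a u y b v where 1: "(x,a) \<in> G" "z = x + sc (qv u) w" "a1 = a + Poly_Mapping.single w (qv u)"
      and 2: "(y,b) \<in> G" "z = y + sc (qv v) w" "a2 = b + Poly_Mapping.single w (qv v)"
      unfolding G'_def by blast
    have q: "(qv u :: 'l) = qv v" using key[OF 1(1) 2(1)] 1(2) 2(2) by simp
    then have "x = y" using 1(2) 2(2) by simp
    then have "a = b" using Gf 1(1) 2(1) by blast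
    moreover have "(qv u :: 'k) = qv v" using q tr by blast
    ultimately show "a1 = a2" using 1(3) 2(3) by simp
  next
    fix z1 z2 c assume h: "(z1, c) \<in> G'" "(z2, c) \<in> G'"
    then obtain x a u y b v where 1: "(x,a) \<in> G" "z1 = x + sc (qv u) w" "c = a + Poly_Mapping.single w (qv u)"
      and 2: "(y,b) \<in> G" "z2 = y + sc (qv v) w" "c = b + Poly_Mapping.single w (qv v)"
      unfolding G'_def by blast
    have "Poly_Mapping.lookup c w = qv u" unfolding 1(3) using lk[OF 1(1)] by (simp add: lookup_add)
    moreover have "Poly_Mapping.lookup c w = qv v" unfolding 2(3) using lk[OF 2(1)] by (simp add: lookup_add)
    ultimately have qk: "(qv u :: 'k) = qv v" by simp
    then have ql: "(qv u :: 'l) = qv v" using tr by blast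
    have "a = b" using 1(3) 2(3) qk by simp
    then have "x = y" using Gi 1(1) 2(1) by blast
    then show "z1 = z2" using 1(2) 2(2) ql by simp
  next
    fix z1 c1 z2 c2 assume h: "(z1, c1) \<in> G'" "(z2, c2) \<in> G'"
    then obtain x a u y b v where 1: "(x,a) \<in> G" "z1 = x + sc (qv u) w" "c1 = a + Poly_Mapping.single w (qv u)"
      and 2: "(y,b) \<in> G" "z2 = y + sc (qv v) w" "c2 = b + Poly_Mapping.single w (qv v)"
      unfolding G'_def by blast
    let ?s = "qadd ?p u v"
    have sl: "(qv ?s :: 'l) = qv u + qv v" by (rule qv_add)
    have sk: "(qv ?s :: 'k) = qv u + qv v" by (rule qv_transfer_add[OF ch])
    have "z1 + z2 = (x + y) + sc (qv ?s) w" using 1(2) 2(2) sl by (simp add: V algebra_simps)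
    moreover have "c1 + c2 = (a + b) + Poly_Mapping.single w (qv ?s)"
      using 1(3) 2(3) sk by (simp add: single_add algebra_simps)
    ultimately show "(z1 + z2, c1 + c2) \<in> G'" using Ga[OF 1(1) 2(1)] unfolding G'_def by blast
  next
    fix z c t assume h: "(z, c) \<in> G'"
    then obtain x a u where 1: "(x,a) \<in> G" "z = x + sc (qv u) w"
      unfolding G'_def by blast
    obtain a' where a': "(sc (qv t) x, a') \<in> G" using Gs[OF 1(1), of t] by blast
    have "sc (qv t) z = sc (qv t) x + sc (qv (qmul t u)) w" using 1(2) by (simp add: V qv_mul)
    then have "(sc (qv t) z, a' + Poly_Mapping.single w (qv (qmul t u))) \<in> G'"
      unfolding G'_def using a' by blast
    then show "sc (qv t) z \<in> Domain G'" by blast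
  next
    fix z c assume h: "(z, c) \<in> G'"
    then obtain x a u where 1: "(x,a) \<in> G" "c = a + Poly_Mapping.single w (qv u)"
      unfolding G'_def by blast
    have "Poly_Mapping.keys c \<subseteq> Poly_Mapping.keys a \<union> Poly_Mapping.keys (Poly_Mapping.single w (qv u :: 'k))"
      unfolding 1(2) by (rule keys_add)
    also have "\<dots> \<subseteq> Domain G \<union> {w}" using Gk[OF 1(1)] by auto
    also have "\<dots> \<subseteq> Domain G'" using sub wG' by blast
    finally show "Poly_Mapping.keys c \<subseteq> Domain G'" .
  qed
  moreover have "G' \<noteq> G" using wG' w by blast
  ultimately show ?thesis using sub by blast
qed

lemma additive_embedding:
  fixes sc :: "'l::division_ring \<Rightarrow> 'w::ab_group_add \<Rightarrow> 'w"
  assumes vs: "is_vector_space sc" and ch: "CHAR('k::division_ring) = CHAR('l)"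
  shows "\<exists>\<psi> :: 'w \<Rightarrow> ('w \<Rightarrow>\<^sub>0 'k). (\<forall>a b. \<psi> (a + b) = \<psi> a + \<psi> b) \<and> inj \<psi>"
proof -
  have "\<exists>M\<in>{G :: ('w \<times> ('w \<Rightarrow>\<^sub>0 'k)) set. good sc G}. \<forall>X\<in>{G. good sc G}. M \<subseteq> X \<longrightarrow> X = M"
  proof (rule Zorn_Lemma2, intro ballI)
    fix C :: "('w \<times> ('w \<Rightarrow>\<^sub>0 'k)) set set" assume C: "C \<in> chains {G. good sc G}"
    show "\<exists>U\<in>{G :: ('w \<times> ('w \<Rightarrow>\<^sub>0 'k)) set. good sc G}. \<forall>X\<in>C. X \<subseteq> U"
    proof (cases "C = {}")
      case True then show ?thesis using good_single[OF vs] by blast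
    next
      case False then show ?thesis using good_union[OF C False] by blast
    qed
  qed
  then obtain G :: "('w \<times> ('w \<Rightarrow>\<^sub>0 'k)) set" where g: "good sc G" and mx: "\<And>X. good sc X \<Longrightarrow> G \<subseteq> X \<Longrightarrow> X = G"
    by blast
  have dom: "Domain G = UNIV"
  proof (rule ccontr)
    assume "Domain G \<noteq> UNIV"
    then obtain w where "w \<notin> Domain G" by blast
    then show False using good_extend[OF vs ch g] mx by blast
  qed
  have Gf: "\<And>x a b. (x,a) \<in> G \<Longrightarrow> (x,b) \<in> G \<Longrightarrow> a = b"
    and Gi: "\<And>x y a. (x,a) \<in> G \<Longrightarrow> (y,a) \<in> G \<Longrightarrow> x = y"
    and Ga: "\<And>x a y b. (x,a) \<in> G \<Longrightarrow> (y,b) \<in> G \<Longrightarrow> (x + y, a + b) \<in> G"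
    using g unfolding good_def by blast+
  define \<psi> where "\<psi> x = (THE a. (x, a) \<in> G)" for x
  have in_G: "(x, \<psi> x) \<in> G" for x
  proof -
    obtain a where a: "(x, a) \<in> G" using dom by blast
    then have "\<psi> x = a" unfolding \<psi>_def using Gf by blast
    then show ?thesis using a by simp
  qed
  have "\<psi> (a + b) = \<psi> a + \<psi> b" for a b
    using Gf[OF in_G Ga[OF in_G in_G]] by simp
  moreover have "inj \<psi>"
    by (rule injI) (metis Gi in_G)
  ultimately show ?thesis by blast
qed


definition scP :: "'k::division_ring \<Rightarrow> ('w \<Rightarrow>\<^sub>0 'k) \<Rightarrow> ('w \<Rightarrow>\<^sub>0 'k)" where
  "scP c f = Poly_Mapping.map (\<lambda>x. c * x) f"

lemma lookup_scP[simp]: "Poly_Mapping.lookup (scP c f) k = c * Poly_Mapping.lookup f k"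
  by (simp add: scP_def map.rep_eq when_def)

lemma vs_scP: "is_vector_space (scP :: 'k::division_ring \<Rightarrow> ('w \<Rightarrow>\<^sub>0 'k) \<Rightarrow> ('w \<Rightarrow>\<^sub>0 'k))"
  unfolding is_vector_space_def
  by (intro conjI allI; rule poly_mapping_eqI) (simp_all add: lookup_add algebra_simps)

lemma inf_pm:
  assumes "infinite (UNIV :: 'w set)"
  shows "infinite (UNIV :: ('w \<Rightarrow>\<^sub>0 'k::zero_neq_one) set)"
proof
  assume fin: "finite (UNIV :: ('w \<Rightarrow>\<^sub>0 'k) set)"
  have "inj (\<lambda>w::'w. Poly_Mapping.single w (1::'k))"
  proof (rule injI)
    fix x y :: 'w assume "Poly_Mapping.single x (1::'k) = Poly_Mapping.single y 1"
    then have "Poly_Mapping.lookup (Poly_Mapping.single x (1::'k)) x = Poly_Mapping.lookup (Poly_Mapping.single y 1) x"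
      by simp
    then show "x = y" by (simp add: lookup_single when_def split: if_splits)
  qed
  moreover have "finite (range (\<lambda>w::'w. Poly_Mapping.single w (1::'k)))"
    by (rule finite_subset[OF subset_UNIV fin])
  ultimately have "finite (UNIV :: 'w set)"
    using finite_imageD by blast
  then show False using assms by simp
qed

definition graphl :: "('w \<Rightarrow>\<^sub>0 'k::zero) \<Rightarrow> ('w \<times> 'k) list" where
  "graphl f = (SOME xs. set xs = (\<lambda>w. (w, Poly_Mapping.lookup f w)) ` Poly_Mapping.keys f)"

lemma graphl_set: "set (graphl f) = (\<lambda>w. (w, Poly_Mapping.lookup f w)) ` Poly_Mapping.keys f"
  unfolding graphl_def by (rule someI_ex) (simp add: finite_list)

lemma inj_graphl: "inj graphl"
proof (rule injI)
  fix f g :: "'w \<Rightarrow>\<^sub>0 'k::zero" assume "graphl f = graphl g"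
  then have e: "(\<lambda>w. (w, Poly_Mapping.lookup f w)) ` Poly_Mapping.keys f = (\<lambda>w. (w, Poly_Mapping.lookup g w)) ` Poly_Mapping.keys g"
    using graphl_set by metis
  show "f = g"
  proof (rule poly_mapping_eqI)
    fix k
    show "Poly_Mapping.lookup f k = Poly_Mapping.lookup g k"
    proof (cases "Poly_Mapping.lookup f k = 0")
      case True
      show ?thesis
      proof (rule ccontr)
        assume "Poly_Mapping.lookup f k \<noteq> Poly_Mapping.lookup g k"
        then have "k \<in> Poly_Mapping.keys g" using True by (simp add: in_keys_iff)
        then have "(k, Poly_Mapping.lookup g k) \<in> (\<lambda>w. (w, Poly_Mapping.lookup f w)) ` Poly_Mapping.keys f"
          using e by blast
        then show False using True \<open>k \<in> Poly_Mapping.keys g\<close> by (auto simp: in_keys_iff)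
      qed
    next
      case False
      then have "k \<in> Poly_Mapping.keys f" by (simp add: in_keys_iff)
      then have "(k, Poly_Mapping.lookup f k) \<in> (\<lambda>w. (w, Poly_Mapping.lookup g w)) ` Poly_Mapping.keys g"
        using e by blast
      then show ?thesis by auto
    qed
  qed
qed

lemma inj_lists_infinite:
  assumes "infinite (UNIV :: 'a set)"
  shows "\<exists>enc :: 'a list \<Rightarrow> 'a. inj enc"
proof -
  obtain P :: "'a \<times> 'a \<Rightarrow> 'a" where P: "bij_betw P (UNIV \<times> UNIV) UNIV"
    using card_of_Times_same_infinite[OF assms] card_of_ordIso by blast
  then have iP: "inj P" by (simp add: bij_betw_def)
  obtain N :: "nat \<Rightarrow> 'a" where iN: "inj N" using infinite_countable_subset[OF assms] by blast
  define enc' where "enc' = rec_list (N 0) (\<lambda>x xs r. P (x, r))"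
  have e'1: "enc' [] = N 0" and e'2: "enc' (x # xs) = P (x, enc' xs)" for x xs
    by (simp_all add: enc'_def)
  have inj': "length xs = length ys \<Longrightarrow> enc' xs = enc' ys \<Longrightarrow> xs = ys" for xs ys
  proof (induction xs arbitrary: ys)
    case Nil then show ?case by simp
  next
    case (Cons x xs)
    then obtain y ys' where ys: "ys = y # ys'" by (cases ys) auto
    then have "P (x, enc' xs) = P (y, enc' ys')" using Cons.prems by (simp add: e'2)
    then have "x = y" "enc' xs = enc' ys'" using injD[OF iP] by auto
    then show ?case using Cons ys by simp
  qed
  define enc where "enc xs = P (N (length xs), enc' xs)" for xs
  have "inj enc"
  proof (rule injI)
    fix xs ys assume "enc xs = enc ys"
    then have "N (length xs) = N (length ys)" "enc' xs = enc' ys" using injD[OF iP] by (auto simp: enc_def)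
    then show "xs = ys" using inj' injD[OF iN] by blast
  qed
  then show ?thesis by blast
qed

lemma inj_pm_pair:
  assumes "infinite (UNIV :: 'w set)"
  shows "\<exists>e :: ('w \<Rightarrow>\<^sub>0 'k::zero) \<Rightarrow> 'w \<times> 'k. inj e"
proof -
  have "infinite (UNIV :: ('w \<times> 'k) set)" using assms by (simp add: finite_prod)
  then obtain enc :: "('w \<times> 'k) list \<Rightarrow> 'w \<times> 'k" where "inj enc" using inj_lists_infinite by blast
  then have "inj (enc \<circ> graphl)" using inj_graphl by (rule inj_compose)
  then show ?thesis by blast
qed

lemma dir:
  fixes sc :: "'k::division_ring \<Rightarrow> 'v::ab_group_add \<Rightarrow> 'v"
    and sc' :: "'l::division_ring \<Rightarrow> 'w::ab_group_add \<Rightarrow> 'w"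
    and hT :: "'w \<times> 'k \<Rightarrow> 'T"
  assumes vs: "is_vector_space sc" and vs': "is_vector_space sc'"
    and iv: "infinite (UNIV :: 'v set)" and iw: "infinite (UNIV :: 'w set)"
    and ch: "CHAR('k) = CHAR('l)" and ih: "inj hT"
  shows "th_loc_trace_defines TYPE('T) TYPE('T) var (vs_struct sc) var (vs_struct sc')"
proof -
  obtain \<psi> :: "'w \<Rightarrow> ('w \<Rightarrow>\<^sub>0 'k)" where psi: "\<And>a b. \<psi> (a + b) = \<psi> a + \<psi> b" "inj \<psi>"
    using additive_embedding[OF vs' ch] by blast
  obtain e :: "('w \<Rightarrow>\<^sub>0 'k) \<Rightarrow> 'w \<times> 'k" where ie: "inj e" using inj_pm_pair[OF iw] by blast
  define hN where "hN = hT \<circ> e"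
  define hM where "hM = (\<lambda>w. hT (w, 0))"
  have iN: "inj hN" unfolding hN_def using ie ih by (simp add: inj_compose)
  have iM: "inj hM" unfolding hM_def using ih by (auto simp: inj_def)
  have N0: "elem_equiv var (vs_struct sc) (vs_struct (scP :: 'k \<Rightarrow> ('w \<Rightarrow>\<^sub>0 'k) \<Rightarrow> ('w \<Rightarrow>\<^sub>0 'k)))"
    by (rule ee_vs[OF vs iv vs_scP inf_pm[OF iw]])
  have l0: "loc_trace_defines var (vs_struct (scP :: 'k \<Rightarrow> ('w \<Rightarrow>\<^sub>0 'k) \<Rightarrow> ('w \<Rightarrow>\<^sub>0 'k))) var (vs_struct sc')"
    by (rule ltd_g2v, rule ltd_grp_emb[OF vs' iw psi])
  show ?thesis unfolding th_loc_trace_defines_def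
  proof (intro exI conjI)
    show "is_struct var (transp hN (vs_struct (scP :: 'k \<Rightarrow> ('w \<Rightarrow>\<^sub>0 'k) \<Rightarrow> ('w \<Rightarrow>\<^sub>0 'k))))"
      by (rule is_struct_transp)
    show "is_struct var (transp hM (vs_struct sc'))" by (rule is_struct_transp)
    show "elem_equiv var (vs_struct sc) (transp hN (vs_struct (scP :: 'k \<Rightarrow> ('w \<Rightarrow>\<^sub>0 'k) \<Rightarrow> ('w \<Rightarrow>\<^sub>0 'k))))"
      by (rule ee_trans[OF N0 ee_transp[OF iN]]) (simp add: vs_struct_def)
    show "elem_equiv var (vs_struct sc') (transp hM (vs_struct sc'))"
      by (rule ee_transp[OF iM]) (simp add: vs_struct_def)
    show "loc_trace_defines var (transp hN (vs_struct (scP :: 'k \<Rightarrow> ('w \<Rightarrow>\<^sub>0 'k) \<Rightarrow> ('w \<Rightarrow>\<^sub>0 'k)))) var (transp hM (vs_struct sc'))"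
      by (rule ltd_transp[OF iN iM _ _ l0]) (simp_all add: vs_struct_def)
  qed
qed

theorem proposition4p1:
  fixes sc :: "'k::division_ring \<Rightarrow> 'v::ab_group_add \<Rightarrow> 'v"
    and sc' :: "'l::division_ring \<Rightarrow> 'w::ab_group_add \<Rightarrow> 'w"
  shows "(is_vector_space sc \<longrightarrow>
            loc_trace_equiv TYPE('v) TYPE('v) var (vs_struct sc) gar (grp_struct TYPE('v)))
       \<and> (is_vector_space sc \<and> is_vector_space sc' \<and>
            infinite (UNIV :: 'v set) \<and> infinite (UNIV :: 'w set) \<and> CHAR('k) = CHAR('l) \<longrightarrow>
            loc_trace_equiv TYPE('v \<times> 'w \<times> 'k \<times> 'l) TYPE('v \<times> 'w \<times> 'k \<times> 'l)
              var (vs_struct sc) var (vs_struct sc'))"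
proof (intro conjI impI)
  assume "is_vector_space sc"
  then show "loc_trace_equiv TYPE('v) TYPE('v) var (vs_struct sc) gar (grp_struct TYPE('v))"
    by (rule part1)
next
  assume h: "is_vector_space sc \<and> is_vector_space sc' \<and>
            infinite (UNIV :: 'v set) \<and> infinite (UNIV :: 'w set) \<and> CHAR('k) = CHAR('l)"
  have 1: "th_loc_trace_defines TYPE('v \<times> 'w \<times> 'k \<times> 'l) TYPE('v \<times> 'w \<times> 'k \<times> 'l) var (vs_struct sc) var (vs_struct sc')"
    by (rule dir[where hT = "\<lambda>(w, c). (undefined, w, c, undefined)"]) (use h in \<open>auto simp: inj_def\<close>)
  have 2: "th_loc_trace_defines TYPE('v \<times> 'w \<times> 'k \<times> 'l) TYPE('v \<times> 'w \<times> 'k \<times> 'l) var (vs_struct sc') var (vs_struct sc)"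
    by (rule dir[where hT = "\<lambda>(v, c). (v, undefined, undefined, c)"]) (use h in \<open>auto simp: inj_def\<close>)
  show "loc_trace_equiv TYPE('v \<times> 'w \<times> 'k \<times> 'l) TYPE('v \<times> 'w \<times> 'k \<times> 'l) var (vs_struct sc) var (vs_struct sc')"
    unfolding loc_trace_equiv_def using 1 2 by blast
qed

end
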